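(* Let $n\ge2$. There exists a set $T$ of partitions of $n$ with $(1^n)\in T$ such that the Schur function $s_{(n-1,1)}$ appears with negative coefficient in $\psi_T=\sum_{\mu\in T}p_\mu$ if and only if $n\ge10$. There exists a set $T$ of partitions of $n$ with $(1^n)\in T$ such that $s_{(2,1^{n-2})}$ appears with negative coefficient in $\psi_T$ if and only if $n\ge6$.
   Context: $p_\mu=\prod_ip_{\mu_i}$ denotes power sums; coefficients refer to the expansion in the Schur function basis. *)

theory Defs
  imports Main
begin

definition is_partition :: "nat \<Rightarrow> nat list \<Rightarrow> bool" where
  "is_partition n la \<longleftrightarrow> sorted (rev la) \<and> (\<forall>x\<in>set la. 0 < x) \<and> sum_list la = n"

definition partitions :: "nat \<Rightarrow> nat list set" where
  "partitions n = {la. is_partition n la}"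

text \<open>Symmetric functions of degree n are represented by the corresponding
  symmetric polynomials in the N = n variables x_0,...,x_{N-1}; a polynomial is
  given by its coefficient function on exponent vectors (nat \<Rightarrow> nat).
  (In degree n, with n variables, restriction from the ring of symmetric
  functions is injective, so Schur coefficients are unchanged.)\<close>

text \<open>Coefficient of x^alpha in p_mu = prod_j (sum_{i<N} x_i^{mu_j}):
  number of ways to choose a variable index for each part.\<close>
definition pcoeff :: "nat \<Rightarrow> nat list \<Rightarrow> (nat \<Rightarrow> nat) \<Rightarrow> int" where
  "pcoeff N \<mu> \<alpha> = int (card {f :: nat \<Rightarrow> nat.
      (\<forall>j. j < length \<mu> \<longrightarrow> f j < N) \<and> (\<forall>j. length \<mu> \<le> j \<longrightarrow> f j = 0) \<and>
      (\<forall>i. (\<Sum>j | j < length \<mu> \<and> f j = i. \<mu> ! j) = \<alpha> i)})"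

definition cells :: "nat list \<Rightarrow> (nat \<times> nat) set" where
  "cells la = {(i, j). i < length la \<and> j < la ! i}"

definition ssyt :: "nat \<Rightarrow> nat list \<Rightarrow> (nat \<times> nat \<Rightarrow> nat) set" where
  "ssyt N la = {T. (\<forall>c\<in>cells la. T c < N) \<and> (\<forall>c. c \<notin> cells la \<longrightarrow> T c = 0) \<and>
      (\<forall>i j. (i, Suc j) \<in> cells la \<longrightarrow> T (i, j) \<le> T (i, Suc j)) \<and>
      (\<forall>i j. (Suc i, j) \<in> cells la \<longrightarrow> T (i, j) < T (Suc i, j))}"

text \<open>Coefficient of x^alpha in the Schur polynomial s_lambda(x_0..x_{N-1})
  (Kostka number).\<close>
definition scoeff :: "nat \<Rightarrow> nat list \<Rightarrow> (nat \<Rightarrow> nat) \<Rightarrow> int" where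
  "scoeff N la \<alpha> = int (card {T \<in> ssyt N la. \<forall>i. card {c \<in> cells la. T c = i} = \<alpha> i})"

definition psi :: "nat \<Rightarrow> nat list set \<Rightarrow> (nat \<Rightarrow> nat) \<Rightarrow> int" where
  "psi n T \<alpha> = (\<Sum>\<mu>\<in>T. pcoeff n \<mu> \<alpha>)"

definition schur_coeff :: "nat \<Rightarrow> ((nat \<Rightarrow> nat) \<Rightarrow> int) \<Rightarrow> nat list \<Rightarrow> int" where
  "schur_coeff n f la = (THE c. (\<forall>\<mu>. \<mu> \<notin> partitions n \<longrightarrow> c \<mu> = 0) \<and>
      (\<forall>\<alpha>. f \<alpha> = (\<Sum>\<mu>\<in>partitions n. c \<mu> * scoeff n \<mu> \<alpha>))) la"

end

theory Submission
  imports Defs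
begin


definition pv :: "nat list \<Rightarrow> nat \<Rightarrow> nat" where
  "pv la i = (if i < length la then la ! i else 0)"

definition cellsv :: "(nat \<Rightarrow> nat) \<Rightarrow> (nat \<times> nat) set" where
  "cellsv lam = {(i, j). j < lam i}"

lemma cells_pv: "cells la = cellsv (pv la)"
  unfolding cells_def cellsv_def pv_def by (auto split: if_splits)

definition ssytv :: "nat \<Rightarrow> (nat \<Rightarrow> nat) \<Rightarrow> (nat \<times> nat \<Rightarrow> nat) set" where
  "ssytv N lam = {T. (\<forall>c\<in>cellsv lam. T c < N) \<and> (\<forall>c. c \<notin> cellsv lam \<longrightarrow> T c = 0) \<and>
      (\<forall>i j. (i, Suc j) \<in> cellsv lam \<longrightarrow> T (i, j) \<le> T (i, Suc j)) \<and>
      (\<forall>i j. (Suc i, j) \<in> cellsv lam \<longrightarrow> T (i, j) < T (Suc i, j))}"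

lemma ssyt_pv: "ssyt N la = ssytv N (pv la)"
  unfolding ssyt_def ssytv_def cells_pv ..

definition Kv :: "nat \<Rightarrow> (nat \<Rightarrow> nat) \<Rightarrow> (nat \<Rightarrow> nat) \<Rightarrow> nat" where
  "Kv N lam \<alpha> = card {T \<in> ssytv N lam. \<forall>i. card {c \<in> cellsv lam. T c = i} = \<alpha> i}"

lemma scoeff_Kv: "scoeff N la \<alpha> = int (Kv N (pv la) \<alpha>)"
  unfolding scoeff_def Kv_def ssyt_pv cells_pv ..

definition shape :: "nat \<Rightarrow> (nat \<Rightarrow> nat) \<Rightarrow> bool" where
  "shape N lam \<longleftrightarrow> (\<forall>i. lam (Suc i) \<le> lam i) \<and> (\<forall>i. N \<le> i \<longrightarrow> lam i = 0)"

definition hs :: "(nat \<Rightarrow> nat) \<Rightarrow> (nat \<Rightarrow> nat) \<Rightarrow> bool" where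
  "hs \<rho> \<sigma> \<longleftrightarrow> (\<forall>i. \<sigma> (Suc i) \<le> \<rho> i \<and> \<rho> i \<le> \<sigma> i)"

definition sz :: "nat \<Rightarrow> (nat \<Rightarrow> nat) \<Rightarrow> nat" where
  "sz N \<sigma> = (\<Sum>i<N. \<sigma> i)"

definition chainset :: "nat \<Rightarrow> (nat \<Rightarrow> nat) \<Rightarrow> (nat \<Rightarrow> nat) \<Rightarrow> (nat \<Rightarrow> nat \<Rightarrow> nat) set" where
  "chainset N lam \<alpha> = {G. G 0 = (\<lambda>i. 0) \<and> (\<forall>k. N \<le> k \<longrightarrow> G k = lam) \<and>
     (\<forall>k<N. hs (G k) (G (Suc k))) \<and> (\<forall>k. \<alpha> k = sz N (G (Suc k)) - sz N (G k))}"

definition GT :: "(nat \<Rightarrow> nat) \<Rightarrow> (nat \<times> nat \<Rightarrow> nat) \<Rightarrow> nat \<Rightarrow> nat \<Rightarrow> nat" where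
  "GT lam T k i = card {j. j < lam i \<and> T (i, j) < k}"

lemma row_mono:
  assumes "T \<in> ssytv N lam" "j \<le> j'" "j' < lam i"
  shows "T (i, j) \<le> T (i, j')"
  using assms(2,3)
proof (induction j' rule: dec_induct)
  case base then show ?case by simp
next
  case (step m)
  then have "T (i, m) \<le> T (i, Suc m)" using assms(1) unfolding ssytv_def cellsv_def by auto
  with step show ?case by simp
qed

lemma downclosed_lessThan:
  fixes S :: "nat set"
  assumes "finite S" "\<And>j j0. j \<in> S \<Longrightarrow> j0 \<le> j \<Longrightarrow> j0 \<in> S"
  shows "S = {..<card S}"
proof (cases "S = {}")
  case True then show ?thesis by simp
next
  case False
  have "S = {..Max S}"
    using assms False by (auto intro: Max_ge Max_in)
  then show ?thesis by (metis card_lessThan lessThan_Suc_atMost)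
qed

lemma GT_prefix:
  assumes "T \<in> ssytv N lam"
  shows "{j. j < lam i \<and> T (i, j) < k} = {..<GT lam T k i}"
  unfolding GT_def
proof (rule downclosed_lessThan)
  show "finite {j. j < lam i \<and> T (i, j) < k}" by simp
next
  fix j j0 assume "j \<in> {j. j < lam i \<and> T (i, j) < k}" "j0 \<le> j"
  then show "j0 \<in> {j. j < lam i \<and> T (i, j) < k}"
    using row_mono[OF assms, of j0 j i] by auto
qed

lemma GT_iff:
  assumes "T \<in> ssytv N lam" "j < lam i"
  shows "T (i, j) < k \<longleftrightarrow> j < GT lam T k i"
  using GT_prefix[OF assms(1), of i k] assms(2) by (metis (mono_tags, lifting) lessThan_iff mem_Collect_eq)

lemma GT_le: "GT lam T k i \<le> lam i"
  unfolding GT_def by (rule order_trans[OF card_mono[of "{..<lam i}"]]) auto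

lemma GT_0: "GT lam T 0 = (\<lambda>i. 0)"
  unfolding GT_def by auto

lemma ssytv_lt: "T \<in> ssytv N lam \<Longrightarrow> j < lam i \<Longrightarrow> T (i, j) < N"
  unfolding ssytv_def cellsv_def by auto

lemma ssytv_out: "T \<in> ssytv N lam \<Longrightarrow> \<not> j < lam i \<Longrightarrow> T (i, j) = 0"
  unfolding ssytv_def cellsv_def by auto

lemma ssytv_col: "T \<in> ssytv N lam \<Longrightarrow> j < lam (Suc i) \<Longrightarrow> T (i, j) < T (Suc i, j)"
  unfolding ssytv_def cellsv_def by auto

lemma ssytv_row: "T \<in> ssytv N lam \<Longrightarrow> Suc j < lam i \<Longrightarrow> T (i, j) \<le> T (i, Suc j)"
  unfolding ssytv_def cellsv_def by auto

lemma GT_N: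
  assumes "T \<in> ssytv N lam" "N \<le> k"
  shows "GT lam T k = lam"
proof
  fix i
  have "{j. j < lam i \<and> T (i, j) < k} = {..<lam i}"
    using ssytv_lt[OF assms(1)] assms(2) by (auto intro: less_le_trans)
  then show "GT lam T k i = lam i" unfolding GT_def by simp
qed

lemma GT_mono1: "GT lam T k i \<le> GT lam T (Suc k) i"
  unfolding GT_def by (rule card_mono) auto

lemma GT_col:
  assumes "T \<in> ssytv N lam" "shape N lam"
  shows "GT lam T (Suc k) (Suc i) \<le> GT lam T k i"
proof -
  have "{..<GT lam T (Suc k) (Suc i)} \<subseteq> {..<GT lam T k i}"
  proof (rule subsetI)
    fix j assume "j \<in> {..<GT lam T (Suc k) (Suc i)}"
    then have j: "j < lam (Suc i)" "T (Suc i, j) < Suc k"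
      using GT_prefix[OF assms(1), of "Suc i" "Suc k"] by auto
    have "lam (Suc i) \<le> lam i" using assms(2) unfolding shape_def by auto
    with j have "j < lam i" by simp
    moreover have "T (i, j) < k" using ssytv_col[OF assms(1) j(1)] j(2) by simp
    ultimately show "j \<in> {..<GT lam T k i}" using GT_iff[OF assms(1)] by auto
  qed
  then show ?thesis by simp
qed

lemma sum_diff_nat_mono:
  fixes f g :: "nat \<Rightarrow> nat"
  assumes "\<And>i. i \<in> A \<Longrightarrow> g i \<le> f i"
  shows "(\<Sum>i\<in>A. f i - g i) = (\<Sum>i\<in>A. f i) - (\<Sum>i\<in>A. g i)"
  using assms by (simp add: sum_subtractf_nat)

lemma GT_content:
  assumes "T \<in> ssytv N lam" "shape N lam"
  shows "card {c \<in> cellsv lam. T c = k} = sz N (GT lam T (Suc k)) - sz N (GT lam T k)"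
proof -
  have eq: "{c \<in> cellsv lam. T c = k} = Sigma {..<N} (\<lambda>i. {GT lam T k i..<GT lam T (Suc k) i})"
  proof (rule set_eqI, clarify)
    fix i j
    show "((i, j) \<in> {c \<in> cellsv lam. T c = k}) =
          ((i, j) \<in> Sigma {..<N} (\<lambda>i. {GT lam T k i..<GT lam T (Suc k) i}))"
    proof
      assume "(i, j) \<in> {c \<in> cellsv lam. T c = k}"
      then have h: "j < lam i" "T (i, j) = k" unfolding cellsv_def by auto
      then have "i < N" using assms(2) unfolding shape_def by (metis not_less0 not_le)
      with h show "(i, j) \<in> Sigma {..<N} (\<lambda>i. {GT lam T k i..<GT lam T (Suc k) i})"
        using GT_iff[OF assms(1) h(1), of k] GT_iff[OF assms(1) h(1), of "Suc k"] by auto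
    next
      assume "(i, j) \<in> Sigma {..<N} (\<lambda>i. {GT lam T k i..<GT lam T (Suc k) i})"
      then have h: "GT lam T k i \<le> j" "j < GT lam T (Suc k) i" by auto
      then have jl: "j < lam i" using GT_le[of lam T "Suc k" i] by simp
      show "(i, j) \<in> {c \<in> cellsv lam. T c = k}"
        using GT_iff[OF assms(1) jl, of k] GT_iff[OF assms(1) jl, of "Suc k"] h jl
        unfolding cellsv_def by auto
    qed
  qed
  have "card {c \<in> cellsv lam. T c = k} = (\<Sum>i<N. GT lam T (Suc k) i - GT lam T k i)"
    unfolding eq by (subst card_SigmaI) auto
  also have "\<dots> = sz N (GT lam T (Suc k)) - sz N (GT lam T k)"
    unfolding sz_def by (rule sum_diff_nat_mono) (rule GT_mono1)
  finally show ?thesis .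
qed

lemma GT_chain:
  assumes "T \<in> ssytv N lam" "shape N lam" "\<forall>i. card {c \<in> cellsv lam. T c = i} = \<alpha> i"
  shows "GT lam T \<in> chainset N lam \<alpha>"
  unfolding chainset_def hs_def
  using GT_0 GT_N[OF assms(1)] GT_mono1 GT_col[OF assms(1,2)] GT_content[OF assms(1,2)] assms(3)
  by auto

section \<open>From chains to tableaux\<close>

definition TT :: "(nat \<Rightarrow> nat) \<Rightarrow> (nat \<Rightarrow> nat \<Rightarrow> nat) \<Rightarrow> nat \<times> nat \<Rightarrow> nat" where
  "TT lam G c = (if snd c < lam (fst c) then (LEAST k. snd c < G (Suc k) (fst c)) else 0)"

lemma chain_mono1:
  assumes "G \<in> chainset N lam \<alpha>"
  shows "G k i \<le> G (Suc k) i"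
proof (cases "k < N")
  case True then show ?thesis using assms unfolding chainset_def hs_def by auto
next
  case False then show ?thesis using assms unfolding chainset_def by auto
qed

lemma chain_mono:
  assumes "G \<in> chainset N lam \<alpha>" "k \<le> k'"
  shows "G k i \<le> G k' i"
  using assms(2)
proof (induction k' rule: dec_induct)
  case base then show ?case by simp
next
  case (step m) then show ?case using chain_mono1[OF assms(1), of m i] by simp
qed

lemma chain_N: "G \<in> chainset N lam \<alpha> \<Longrightarrow> N \<le> k \<Longrightarrow> G k = lam"
  unfolding chainset_def by auto

lemma chain_0: "G \<in> chainset N lam \<alpha> \<Longrightarrow> G 0 = (\<lambda>i. 0)"
  unfolding chainset_def by auto

lemma chain_hs: "G \<in> chainset N lam \<alpha> \<Longrightarrow> k < N \<Longrightarrow> hs (G k) (G (Suc k))"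
  unfolding chainset_def by auto

lemma chain_content: "G \<in> chainset N lam \<alpha> \<Longrightarrow> \<alpha> k = sz N (G (Suc k)) - sz N (G k)"
  unfolding chainset_def by auto

lemma chain_le:
  assumes "G \<in> chainset N lam \<alpha>"
  shows "G k i \<le> lam i"
  using chain_mono[OF assms, of k "max k N" i] chain_N[OF assms, of "max k N"] by simp

lemma TT_iff:
  assumes "G \<in> chainset N lam \<alpha>" "j < lam i"
  shows "TT lam G (i, j) < k \<longleftrightarrow> j < G k i"
proof -
  have ex: "\<exists>k. j < G (Suc k) i"
    using chain_N[OF assms(1), of "Suc N"] assms(2) by auto
  show ?thesis
  proof
    assume "TT lam G (i, j) < k"
    then have "(LEAST k. j < G (Suc k) i) < k" using assms(2) unfolding TT_def by simp
    moreover have "j < G (Suc (LEAST k. j < G (Suc k) i)) i" using LeastI_ex[OF ex] .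
    ultimately show "j < G k i" using chain_mono[OF assms(1), of "Suc (LEAST k. j < G (Suc k) i)" k i] by simp
  next
    assume h: "j < G k i"
    then obtain k' where k': "k = Suc k'" using chain_0[OF assms(1)] by (cases k) auto
    then have "(LEAST k. j < G (Suc k) i) \<le> k'" using h by (intro Least_le) simp
    then show "TT lam G (i, j) < k" using assms(2) k' unfolding TT_def by simp
  qed
qed

lemma TT_ssytv:
  assumes "G \<in> chainset N lam \<alpha>" "shape N lam"
  shows "TT lam G \<in> ssytv N lam"
  unfolding ssytv_def
proof (intro CollectI conjI allI ballI impI)
  fix c assume "c \<in> cellsv lam"
  then obtain i j where c: "c = (i, j)" "j < lam i" unfolding cellsv_def by auto
  then show "TT lam G c < N" using TT_iff[OF assms(1) c(2), of N] chain_N[OF assms(1), of N] by simp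
next
  fix c assume "c \<notin> cellsv lam"
  then show "TT lam G c = 0" unfolding cellsv_def TT_def by (cases c) auto
next
  fix i j assume "(i, Suc j) \<in> cellsv lam"
  then have h: "Suc j < lam i" unfolding cellsv_def by auto
  let ?t = "TT lam G (i, Suc j)"
  have "Suc j < G (Suc ?t) i" using TT_iff[OF assms(1) h, of "Suc ?t"] by simp
  then have "j < G (Suc ?t) i" by simp
  then show "TT lam G (i, j) \<le> ?t" using TT_iff[OF assms(1), of j i "Suc ?t"] h by simp
next
  fix i j assume "(Suc i, j) \<in> cellsv lam"
  then have h: "j < lam (Suc i)" unfolding cellsv_def by auto
  have hi: "j < lam i" using h assms(2) unfolding shape_def by (metis less_le_trans)
  let ?t = "TT lam G (Suc i, j)"
  have t: "?t < N" using TT_iff[OF assms(1) h, of N] chain_N[OF assms(1), of N] h by simp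
  have "j < G (Suc ?t) (Suc i)" using TT_iff[OF assms(1) h, of "Suc ?t"] by simp
  also have "\<dots> \<le> G ?t i" using chain_hs[OF assms(1) t] unfolding hs_def by auto
  finally show "TT lam G (i, j) < ?t" using TT_iff[OF assms(1) hi] by simp
qed

lemma GT_TT:
  assumes "G \<in> chainset N lam \<alpha>" "shape N lam"
  shows "GT lam (TT lam G) = G"
proof (intro ext)
  fix k i
  have "{j. j < lam i \<and> TT lam G (i, j) < k} = {..<G k i}"
    using TT_iff[OF assms(1)] chain_le[OF assms(1), of k i] by auto
  then show "GT lam (TT lam G) k i = G k i" unfolding GT_def by simp
qed

lemma TT_GT:
  assumes "T \<in> ssytv N lam" "shape N lam"
  shows "TT lam (GT lam T) = T"
proof (intro ext, clarify)
  fix i j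
  have ch: "GT lam T \<in> chainset N lam (\<lambda>k. card {c \<in> cellsv lam. T c = k})"
    using GT_chain[OF assms] by simp
  show "TT lam (GT lam T) (i, j) = T (i, j)"
  proof (cases "j < lam i")
    case True
    have "\<forall>k. TT lam (GT lam T) (i, j) < k \<longleftrightarrow> T (i, j) < k"
      using TT_iff[OF ch True] GT_iff[OF assms(1) True] by simp
    then show ?thesis by (metis lessI less_not_refl2 linorder_neqE_nat)
  next
    case False
    then show ?thesis using ssytv_out[OF assms(1) False] unfolding TT_def by simp
  qed
qed

lemma Kv_chains:
  assumes "shape N lam"
  shows "Kv N lam \<alpha> = card (chainset N lam \<alpha>)"
  unfolding Kv_def
proof (rule bij_betw_same_card[of "GT lam"], rule bij_betw_byWitness[where f' = "TT lam"])
  show "\<forall>a\<in>{T \<in> ssytv N lam. \<forall>i. card {c \<in> cellsv lam. T c = i} = \<alpha> i}. TT lam (GT lam a) = a"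
    using TT_GT[OF _ assms] by auto
  show "\<forall>a'\<in>chainset N lam \<alpha>. GT lam (TT lam a') = a'"
    using GT_TT[OF _ assms] by auto
  show "GT lam ` {T \<in> ssytv N lam. \<forall>i. card {c \<in> cellsv lam. T c = i} = \<alpha> i} \<subseteq> chainset N lam \<alpha>"
    using GT_chain[OF _ assms] by auto
  show "TT lam ` chainset N lam \<alpha> \<subseteq> {T \<in> ssytv N lam. \<forall>i. card {c \<in> cellsv lam. T c = i} = \<alpha> i}"
  proof (rule image_subsetI)
    fix G assume G: "G \<in> chainset N lam \<alpha>"
    have T: "TT lam G \<in> ssytv N lam" by (rule TT_ssytv[OF G assms])
    moreover have "\<forall>i. card {c \<in> cellsv lam. TT lam G c = i} = \<alpha> i"
      using GT_content[OF T assms] GT_TT[OF G assms] chain_content[OF G] by simp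
    ultimately show "TT lam G \<in> {T \<in> ssytv N lam. \<forall>i. card {c \<in> cellsv lam. T c = i} = \<alpha> i}" by simp
  qed
qed


definition swp :: "nat \<Rightarrow> (nat \<Rightarrow> nat) \<Rightarrow> nat \<Rightarrow> nat" where
  "swp k \<alpha> = \<alpha>(k := \<alpha> (Suc k), Suc k := \<alpha> k)"

lemma swp_swp[simp]: "swp k (swp k \<alpha>) = \<alpha>"
  unfolding swp_def by (auto simp: fun_eq_iff)

definition lo :: "(nat \<Rightarrow> nat) \<Rightarrow> (nat \<Rightarrow> nat) \<Rightarrow> nat \<Rightarrow> nat" where
  "lo l c i = max (l i) (c (Suc i))"

definition hi :: "(nat \<Rightarrow> nat) \<Rightarrow> (nat \<Rightarrow> nat) \<Rightarrow> nat \<Rightarrow> nat" where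
  "hi l c i = (if i = 0 then c 0 else min (c i) (l (i - 1)))"

definition rfl :: "(nat \<Rightarrow> nat) \<Rightarrow> (nat \<Rightarrow> nat) \<Rightarrow> (nat \<Rightarrow> nat) \<Rightarrow> nat \<Rightarrow> nat" where
  "rfl l c m = (\<lambda>i. lo l c i + hi l c i - m i)"

lemma box_iff:
  "(hs l m \<and> hs m c) \<longleftrightarrow> (\<forall>i. lo l c i \<le> m i \<and> m i \<le> hi l c i)"
proof
  assume h: "hs l m \<and> hs m c"
  show "\<forall>i. lo l c i \<le> m i \<and> m i \<le> hi l c i"
  proof
    fix i show "lo l c i \<le> m i \<and> m i \<le> hi l c i"
      using h unfolding hs_def lo_def hi_def by (cases i) auto
  qed
next
  assume h: "\<forall>i. lo l c i \<le> m i \<and> m i \<le> hi l c i"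
  have "m (Suc i) \<le> l i" for i using h[rule_format, of "Suc i"] unfolding hi_def by auto
  moreover have "l i \<le> m i \<and> c (Suc i) \<le> m i" for i using h[rule_format, of i] unfolding lo_def by auto
  moreover have "m i \<le> c i" for i using h[rule_format, of i] unfolding hi_def by (cases i) auto
  ultimately show "hs l m \<and> hs m c" unfolding hs_def by auto
qed

lemma lohi_sum:
  "(\<Sum>i<Suc M. lo l c i + hi l c i) + min (c (Suc M)) (l M) = (\<Sum>i<Suc M. l i) + (\<Sum>i<Suc (Suc M). c i)"
proof (induction M)
  case 0 then show ?case unfolding lo_def hi_def by simp
next
  case (Suc M)
  have "(\<Sum>i<Suc (Suc M). lo l c i + hi l c i) + min (c (Suc (Suc M))) (l (Suc M))
     = ((\<Sum>i<Suc M. lo l c i + hi l c i) + min (c (Suc M)) (l M)) + max (l (Suc M)) (c (Suc (Suc M)))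
       + min (c (Suc (Suc M))) (l (Suc M))"
    unfolding lo_def hi_def by simp
  also have "\<dots> = (\<Sum>i<Suc M. l i) + (\<Sum>i<Suc (Suc M). c i) + l (Suc M) + c (Suc (Suc M))"
    unfolding Suc by simp
  finally show ?case by simp
qed

lemma lohi_sz:
  assumes "c N = 0"
  shows "(\<Sum>i<N. lo l c i + hi l c i) = sz N l + sz N c"
proof (cases N)
  case 0 then show ?thesis unfolding sz_def by simp
next
  case (Suc M)
  with lohi_sum[where M=M and l=l and c=c] assms show ?thesis unfolding sz_def by simp
qed

definition BKc :: "nat \<Rightarrow> (nat \<Rightarrow> nat \<Rightarrow> nat) \<Rightarrow> nat \<Rightarrow> nat \<Rightarrow> nat" where
  "BKc k G = G(Suc k := rfl (G k) (G (Suc (Suc k))) (G (Suc k)))"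

lemma sz_mono: "(\<And>i. a i \<le> b i) \<Longrightarrow> sz N a \<le> sz N b"
  unfolding sz_def by (rule sum_mono) auto

lemma BKc_chain:
  assumes G: "G \<in> chainset N lam \<alpha>" and k: "Suc k < N" and sh: "shape N lam"
  shows "BKc k G \<in> chainset N lam (swp k \<alpha>)"
proof -
  let ?l = "G k" and ?m = "G (Suc k)" and ?c = "G (Suc (Suc k))"
  let ?m' = "rfl ?l ?c ?m"
  have b: "hs ?l ?m \<and> hs ?m ?c" using chain_hs[OF G, of k] chain_hs[OF G, of "Suc k"] k by simp
  then have box: "\<forall>i. lo ?l ?c i \<le> ?m i \<and> ?m i \<le> hi ?l ?c i" using box_iff by blast
  have "\<forall>i. lo ?l ?c i \<le> ?m' i \<and> ?m' i \<le> hi ?l ?c i"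
  proof
    fix i
    have "lo ?l ?c i \<le> ?m i \<and> ?m i \<le> hi ?l ?c i" using box by blast
    then show "lo ?l ?c i \<le> ?m' i \<and> ?m' i \<le> hi ?l ?c i" unfolding rfl_def by arith
  qed
  then have b': "hs ?l ?m' \<and> hs ?m' ?c" using box_iff by blast
  have cN: "?c N = 0" using chain_le[OF G, of "Suc (Suc k)" N] sh unfolding shape_def by auto
  have s1: "sz N ?l \<le> sz N ?m" "sz N ?m \<le> sz N ?c"
    using b unfolding hs_def by (auto intro: sz_mono)
  have "sz N ?m' = (\<Sum>i<N. lo ?l ?c i + hi ?l ?c i) - sz N ?m"
    unfolding rfl_def sz_def using box by (intro sum_diff_nat_mono) (meson le_add2 order_trans)
  also have "\<dots> = sz N ?l + sz N ?c - sz N ?m" using lohi_sz[where c="?c" and N=N and l="?l", OF cN] by simp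
  finally have szm': "sz N ?m' = sz N ?l + sz N ?c - sz N ?m" .
  show ?thesis
    unfolding chainset_def
  proof (intro CollectI conjI allI impI)
    show "BKc k G 0 = (\<lambda>i. 0)" using chain_0[OF G] unfolding BKc_def by simp
  next
    fix k' assume "N \<le> k'" then show "BKc k G k' = lam" using chain_N[OF G] k unfolding BKc_def by auto
  next
    fix k' assume k': "k' < N"
    show "hs (BKc k G k') (BKc k G (Suc k'))"
      using b' chain_hs[OF G k'] unfolding BKc_def by (cases "k' = k"; cases "k' = Suc k") auto
  next
    fix k'
    show "swp k \<alpha> k' = sz N (BKc k G (Suc k')) - sz N (BKc k G k')"
    proof (cases "k' = k")
      case True
      then show ?thesis using chain_content[OF G, of "Suc k"] szm' s1 unfolding BKc_def swp_def by auto
    next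
      case False
      show ?thesis
      proof (cases "k' = Suc k")
        case True
        then show ?thesis using chain_content[OF G, of k] szm' s1 unfolding BKc_def swp_def by auto
      next
        case False
        with \<open>k' \<noteq> k\<close> show ?thesis using chain_content[OF G, of k'] unfolding BKc_def swp_def by auto
      qed
    qed
  qed
qed

lemma BKc_BKc:
  assumes G: "G \<in> chainset N lam \<alpha>" and k: "Suc k < N"
  shows "BKc k (BKc k G) = G"
proof -
  let ?l = "G k" and ?m = "G (Suc k)" and ?c = "G (Suc (Suc k))"
  have b: "hs ?l ?m \<and> hs ?m ?c" using chain_hs[OF G, of k] chain_hs[OF G, of "Suc k"] k by simp
  then have box: "\<forall>i. lo ?l ?c i \<le> ?m i \<and> ?m i \<le> hi ?l ?c i" using box_iff by blast
  have "rfl ?l ?c (rfl ?l ?c ?m) = ?m"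
    unfolding rfl_def using box by (auto simp: fun_eq_iff) (meson add_diff_inverse_nat diff_diff_cancel le_add2 order_trans)
  then show ?thesis unfolding BKc_def by (auto simp: fun_eq_iff)
qed

lemma chainset_swp:
  assumes k: "Suc k < N" and sh: "shape N lam"
  shows "card (chainset N lam (swp k \<alpha>)) = card (chainset N lam \<alpha>)"
proof (rule sym, rule bij_betw_same_card[of "BKc k"], rule bij_betw_byWitness[where f' = "BKc k"])
  show "\<forall>a\<in>chainset N lam \<alpha>. BKc k (BKc k a) = a" using BKc_BKc k by blast
  show "\<forall>a'\<in>chainset N lam (swp k \<alpha>). BKc k (BKc k a') = a'" using BKc_BKc k by blast
  show "BKc k ` chainset N lam \<alpha> \<subseteq> chainset N lam (swp k \<alpha>)" using BKc_chain k sh by blast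
  show "BKc k ` chainset N lam (swp k \<alpha>) \<subseteq> chainset N lam \<alpha>" using BKc_chain[of _ N lam "swp k \<alpha>" k] k sh by auto
qed

lemma Kv_swp:
  assumes k: "Suc k < N" and sh: "shape N lam"
  shows "Kv N lam (swp k \<alpha>) = Kv N lam \<alpha>"
  using chainset_swp[OF assms] Kv_chains[OF sh] by simp


definition P :: "nat \<Rightarrow> (nat \<Rightarrow> nat) \<Rightarrow> nat" where
  "P k \<alpha> = (\<Sum>i<k. \<alpha> i)"

lemma chain_zero:
  assumes G: "G \<in> chainset N lam \<alpha>" and sh: "shape N lam"
  shows "k \<le> i \<Longrightarrow> G k i = 0"
proof (induction k arbitrary: i)
  case 0 then show ?case using chain_0[OF G] by simp
next
  case (Suc k)
  then obtain i' where i': "i = Suc i'" "k \<le> i'" by (cases i) auto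
  show ?case
  proof (cases "k < N")
    case True
    then have "G (Suc k) (Suc i') \<le> G k i'" using chain_hs[OF G True] unfolding hs_def by auto
    then show ?thesis using Suc.IH[OF i'(2)] i' by simp
  next
    case False
    then show ?thesis using chain_N[OF G, of "Suc k"] sh Suc.prems unfolding shape_def by auto
  qed
qed

lemma chain_sz_step:
  assumes G: "G \<in> chainset N lam \<alpha>"
  shows "sz N (G (Suc k)) = sz N (G k) + \<alpha> k"
proof -
  have "sz N (G k) \<le> sz N (G (Suc k))" by (rule sz_mono) (rule chain_mono1[OF G])
  then show ?thesis using chain_content[OF G, of k] by simp
qed

lemma chain_sz:
  assumes G: "G \<in> chainset N lam \<alpha>"
  shows "sz N (G k) = P k \<alpha>"
proof (induction k)
  case 0 then show ?case using chain_0[OF G] unfolding sz_def P_def by simp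
next
  case (Suc k) then show ?case using chain_sz_step[OF G, of k] unfolding P_def by simp
qed

lemma chain_alpha_out:
  assumes G: "G \<in> chainset N lam \<alpha>" "N \<le> k"
  shows "\<alpha> k = 0"
  using chain_content[OF G(1), of k] chain_N[OF G(1), of k] chain_N[OF G(1), of "Suc k"] G(2) by simp

lemma chain_sz_le:
  assumes G: "G \<in> chainset N lam \<alpha>" and sh: "shape N lam"
  shows "sz N (G k) \<le> P k lam"
proof -
  have "sz N (G k) = (\<Sum>i<N. G k i)" unfolding sz_def ..
  also have "\<dots> \<le> (\<Sum>i<N. if i < k then lam i else 0)"
    using chain_zero[OF G sh, of k] chain_le[OF G, of k] by (intro sum_mono) (auto simp: not_less)
  also have "\<dots> = (\<Sum>i\<in>{..<N} \<inter> {..<k}. lam i)"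
    by (simp add: sum.If_cases Int_def)
  also have "\<dots> \<le> (\<Sum>i<k. lam i)" by (rule sum_mono2) auto
  finally show ?thesis unfolding P_def .
qed

lemma Kv_dom:
  assumes "Kv N lam \<alpha> \<noteq> 0" "shape N lam"
  shows "P k \<alpha> \<le> P k lam"
proof -
  obtain G where G: "G \<in> chainset N lam \<alpha>" using assms Kv_chains by fastforce
  show ?thesis using chain_sz[OF G, of k] chain_sz_le[OF G assms(2), of k] by simp
qed

lemma Kv_out:
  assumes "Kv N lam \<alpha> \<noteq> 0" "shape N lam" "N \<le> k"
  shows "\<alpha> k = 0"
proof -
  obtain G where G: "G \<in> chainset N lam \<alpha>" using assms Kv_chains by fastforce
  show ?thesis using chain_alpha_out[OF G assms(3)] .
qed

lemma Kv_total:
  assumes "Kv N lam \<alpha> \<noteq> 0" "shape N lam"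
  shows "P N \<alpha> = sz N lam"
proof -
  obtain G where G: "G \<in> chainset N lam \<alpha>" using assms Kv_chains by fastforce
  show ?thesis using chain_sz[OF G, of N] chain_N[OF G, of N] by simp
qed

lemma sum_le_eq_each:
  fixes f g :: "nat \<Rightarrow> nat"
  assumes "finite A" "\<And>i. i \<in> A \<Longrightarrow> f i \<le> g i" "sum f A = sum g A" "i \<in> A"
  shows "f i = g i"
proof -
  have "(\<Sum>i\<in>A. g i - f i) = 0" using assms(2,3) by (simp add: sum_subtractf_nat)
  then have "g i - f i = 0" using assms(1,4) by simp
  then show ?thesis using assms(2)[OF assms(4)] by simp
qed

definition G0 :: "(nat \<Rightarrow> nat) \<Rightarrow> nat \<Rightarrow> nat \<Rightarrow> nat" where
  "G0 lam k i = (if i < k then lam i else 0)"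

lemma P_le_N:
  assumes sh: "shape N lam"
  shows "P k lam = (\<Sum>i<N. G0 lam k i)"
proof -
  have "(\<Sum>i<N. G0 lam k i) = (\<Sum>i\<in>{..<N} \<inter> {..<k}. lam i)"
    unfolding G0_def by (simp add: sum.If_cases Int_def)
  also have "\<dots> = (\<Sum>i<k. lam i)"
  proof (rule sum.mono_neutral_left)
    show "\<forall>i\<in>{..<k} - {..<N} \<inter> {..<k}. lam i = 0" using sh unfolding shape_def by (metis DiffD1 DiffD2 IntI lessThan_iff not_le)
  qed auto
  finally show ?thesis unfolding P_def by simp
qed

lemma G0_chain:
  assumes sh: "shape N lam"
  shows "G0 lam \<in> chainset N lam lam"
  unfolding chainset_def
proof (intro CollectI conjI allI impI)
  show "G0 lam 0 = (\<lambda>i. 0)" unfolding G0_def by simp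
next
  fix k assume "N \<le> k"
  then show "G0 lam k = lam" using sh unfolding G0_def shape_def by (auto simp: fun_eq_iff)
next
  fix k assume "k < N"
  show "hs (G0 lam k) (G0 lam (Suc k))" using sh unfolding hs_def G0_def shape_def by auto
next
  fix k
  have "sz N (G0 lam (Suc k)) = P (Suc k) lam" "sz N (G0 lam k) = P k lam"
    using P_le_N[OF sh] unfolding sz_def by auto
  then show "lam k = sz N (G0 lam (Suc k)) - sz N (G0 lam k)" unfolding P_def by simp
qed

lemma chainset_diag:
  assumes sh: "shape N lam"
  shows "chainset N lam lam = {G0 lam}"
proof
  show "{G0 lam} \<subseteq> chainset N lam lam" using G0_chain[OF sh] by simp
  show "chainset N lam lam \<subseteq> {G0 lam}"
  proof
    fix G assume G: "G \<in> chainset N lam lam"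
    have "G k i = G0 lam k i" for k i
    proof (cases "i < k")
      case False then show ?thesis using chain_zero[OF G sh, of k i] unfolding G0_def by simp
    next
      case True
      show ?thesis
      proof (cases "i < N")
        case False then show ?thesis using chain_le[OF G, of k i] sh unfolding shape_def G0_def by auto
      next
        case iN: True
        have "(\<Sum>i<N. G k i) = (\<Sum>i<N. G0 lam k i)"
          using chain_sz[OF G, of k] P_le_N[OF sh, of k] unfolding sz_def by simp
        moreover have "\<And>i. i \<in> {..<N} \<Longrightarrow> G k i \<le> G0 lam k i"
          using chain_le[OF G, of k] chain_zero[OF G sh, of k] unfolding G0_def by (auto simp: not_less)
        ultimately show ?thesis using sum_le_eq_each[of "{..<N}" "G k" "G0 lam k" i] iN by simp
      qed
    qed
    then show "G \<in> {G0 lam}" by (auto simp: fun_eq_iff)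
  qed
qed

lemma Kv_diag:
  assumes sh: "shape N lam"
  shows "Kv N lam lam = 1"
  using Kv_chains[OF sh] chainset_diag[OF sh] by simp


section \<open>Partitions as vectors\<close>

lemma len_le_sum_list: "(\<forall>x\<in>set xs. 0 < (x::nat)) \<Longrightarrow> length xs \<le> sum_list xs"
  by (induction xs) auto

lemma part_len: "is_partition n \<mu> \<Longrightarrow> length \<mu> \<le> n"
  unfolding is_partition_def using len_le_sum_list by blast

definition dec :: "(nat \<Rightarrow> nat) \<Rightarrow> bool" where
  "dec \<alpha> \<longleftrightarrow> (\<forall>i. \<alpha> (Suc i) \<le> \<alpha> i)"

lemma dec_mono:
  assumes "dec \<alpha>" "i \<le> j" shows "\<alpha> j \<le> \<alpha> i"
  using assms(2)
proof (induction j rule: dec_induct)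
  case base then show ?case by simp
next
  case (step m) then show ?case using assms(1) unfolding dec_def by (meson le_trans)
qed

lemma pv_dec: "is_partition n \<mu> \<Longrightarrow> dec (pv \<mu>)"
  unfolding dec_def pv_def is_partition_def sorted_rev_iff_nth_Suc by auto

lemma pv_out: "length \<mu> \<le> i \<Longrightarrow> pv \<mu> i = 0"
  unfolding pv_def by simp

lemma pv_shape: "is_partition n \<mu> \<Longrightarrow> shape n (pv \<mu>)"
  using pv_dec[of n \<mu>] part_len[of n \<mu>] pv_out[of \<mu>] unfolding shape_def dec_def by auto

lemma P_pv: "length \<mu> \<le> k \<Longrightarrow> P k (pv \<mu>) = sum_list \<mu>"
proof -
  assume k: "length \<mu> \<le> k"
  have "P k (pv \<mu>) = (\<Sum>i<length \<mu>. pv \<mu> i)"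
    unfolding P_def by (rule sum.mono_neutral_right) (use k pv_out in auto)
  also have "\<dots> = (\<Sum>i<length \<mu>. \<mu> ! i)" unfolding pv_def by simp
  also have "\<dots> = sum_list \<mu>" by (simp add: sum_list_sum_nth atLeast0LessThan)
  finally show ?thesis .
qed

lemma sz_P: "sz N a = P N a" unfolding sz_def P_def ..

lemma pv_inj:
  assumes "\<forall>x\<in>set \<mu>. 0 < x" "\<forall>x\<in>set \<nu>. 0 < x" "pv \<mu> = pv \<nu>"
  shows "\<mu> = \<nu>"
proof -
  have "\<not> length \<mu> < length \<nu>"
  proof
    assume h: "length \<mu> < length \<nu>"
    then have "pv \<nu> (length \<mu>) > 0" using assms(2) unfolding pv_def by auto
    moreover have "pv \<mu> (length \<mu>) = 0" unfolding pv_def by simp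
    ultimately show False using assms(3) by simp
  qed
  moreover have "\<not> length \<nu> < length \<mu>"
  proof
    assume h: "length \<nu> < length \<mu>"
    then have "pv \<mu> (length \<nu>) > 0" using assms(1) unfolding pv_def by auto
    moreover have "pv \<nu> (length \<nu>) = 0" unfolding pv_def by simp
    ultimately show False using assms(3) by simp
  qed
  ultimately have l: "length \<mu> = length \<nu>" by simp
  show ?thesis
  proof (rule nth_equalityI[OF l])
    fix i assume "i < length \<mu>"
    then show "\<mu> ! i = \<nu> ! i" using fun_cong[OF assms(3), of i] l unfolding pv_def by simp
  qed
qed

lemma partitions_pv_inj: "\<mu> \<in> partitions n \<Longrightarrow> \<nu> \<in> partitions n \<Longrightarrow> pv \<mu> = pv \<nu> \<Longrightarrow> \<mu> = \<nu>"
  unfolding partitions_def is_partition_def using pv_inj by blast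

definition Dn :: "nat \<Rightarrow> (nat \<Rightarrow> nat) \<Rightarrow> bool" where
  "Dn n \<alpha> \<longleftrightarrow> (\<forall>i. n \<le> i \<longrightarrow> \<alpha> i = 0) \<and> P n \<alpha> = n"

lemma pv_Dn:
  assumes "\<mu> \<in> partitions n" shows "Dn n (pv \<mu>)"
proof -
  have ip: "is_partition n \<mu>" using assms unfolding partitions_def by simp
  have l: "length \<mu> \<le> n" using part_len[OF ip] .
  have "P n (pv \<mu>) = n" using P_pv[OF l] ip unfolding is_partition_def by simp
  moreover have "\<forall>i. n \<le> i \<longrightarrow> pv \<mu> i = 0" using l pv_out by auto
  ultimately show ?thesis unfolding Dn_def by simp
qed

lemma dec_part:
  assumes "dec \<alpha>" "Dn n \<alpha>"
  shows "\<exists>\<mu>\<in>partitions n. pv \<mu> = \<alpha>"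
proof -
  have ex: "\<exists>i. \<alpha> i = 0" using assms(2) unfolding Dn_def by auto
  define m where "m = (LEAST i. \<alpha> i = 0)"
  have am: "\<alpha> m = 0" unfolding m_def using LeastI_ex[OF ex] .
  have mn: "m \<le> n" unfolding m_def using assms(2) unfolding Dn_def by (auto intro: Least_le)
  have pos: "i < m \<Longrightarrow> 0 < \<alpha> i" for i unfolding m_def using not_less_Least by blast
  have zero: "m \<le> i \<Longrightarrow> \<alpha> i = 0" for i using dec_mono[OF assms(1), of m i] am by simp
  define \<mu> where "\<mu> = map \<alpha> [0..<m]"
  have pv: "pv \<mu> = \<alpha>" unfolding \<mu>_def pv_def by (auto simp: fun_eq_iff zero)
  have "P m \<alpha> = P n \<alpha>"
    unfolding P_def by (rule sum.mono_neutral_left) (use mn zero in auto)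
  then have "sum_list \<mu> = n" using P_pv[of \<mu> m] pv assms(2) unfolding \<mu>_def Dn_def by simp
  moreover have "sorted (rev \<mu>)" unfolding \<mu>_def sorted_rev_iff_nth_Suc using assms(1) unfolding dec_def by simp
  moreover have "\<forall>x\<in>set \<mu>. 0 < x" unfolding \<mu>_def using pos by auto
  ultimately have "\<mu> \<in> partitions n" unfolding partitions_def is_partition_def by simp
  with pv show ?thesis by blast
qed

lemma finite_partitions: "finite (partitions n)"
proof -
  have "partitions n \<subseteq> {xs. set xs \<subseteq> {..n} \<and> length xs \<le> n}"
  proof
    fix xs assume "xs \<in> partitions n"
    then have h: "is_partition n xs" unfolding partitions_def by simp
    then have "length xs \<le> n" by (rule part_len)
    moreover have "set xs \<subseteq> {..n}"
    proof
      fix x assume "x \<in> set xs"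
      then have "x \<le> sum_list xs" by (rule member_le_sum_list) auto
      then show "x \<in> {..n}" using h unfolding is_partition_def by simp
    qed
    ultimately show "xs \<in> {xs. set xs \<subseteq> {..n} \<and> length xs \<le> n}" by simp
  qed
  moreover have "finite {xs. set xs \<subseteq> {..n} \<and> length xs \<le> n}"
    using finite_lists_length_le[of "{..n}" n] by simp
  ultimately show ?thesis by (rule finite_subset)
qed

section \<open>Symmetric functions\<close>

definition symf :: "nat \<Rightarrow> ((nat \<Rightarrow> nat) \<Rightarrow> int) \<Rightarrow> bool" where
  "symf n f \<longleftrightarrow> (\<forall>\<alpha>. f \<alpha> \<noteq> 0 \<longrightarrow> Dn n \<alpha>) \<and> (\<forall>k \<alpha>. Suc k < n \<longrightarrow> f (swp k \<alpha>) = f \<alpha>)"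

lemma symf_scoeff:
  assumes "\<mu> \<in> partitions n"
  shows "symf n (scoeff n \<mu>)"
proof -
  have sh: "shape n (pv \<mu>)" using assms pv_shape unfolding partitions_def by simp
  have szn: "sz n (pv \<mu>) = n" using pv_Dn[OF assms] unfolding Dn_def sz_P by simp
  show ?thesis
    unfolding symf_def scoeff_Kv Dn_def
    using Kv_out[OF _ sh] Kv_total[OF _ sh] szn Kv_swp[OF _ sh] by auto
qed

lemma symf_lincomb:
  assumes "symf n f" "\<And>\<mu>. \<mu> \<in> A \<Longrightarrow> symf n (g \<mu>)"
  shows "symf n (\<lambda>\<alpha>. f \<alpha> - (\<Sum>\<mu>\<in>A. c \<mu> * g \<mu> \<alpha>))"
  unfolding symf_def
proof (intro conjI allI impI)
  fix \<alpha> assume h: "f \<alpha> - (\<Sum>\<mu>\<in>A. c \<mu> * g \<mu> \<alpha>) \<noteq> 0"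
  show "Dn n \<alpha>"
  proof (cases "f \<alpha> = 0")
    case False then show ?thesis using assms(1) unfolding symf_def by blast
  next
    case True
    then have "(\<Sum>\<mu>\<in>A. c \<mu> * g \<mu> \<alpha>) \<noteq> 0" using h by simp
    then obtain \<mu> where "\<mu> \<in> A" "c \<mu> * g \<mu> \<alpha> \<noteq> 0" by (meson sum.neutral)
    then show ?thesis using assms(2)[of \<mu>] unfolding symf_def by auto
  qed
next
  fix k \<alpha> assume k: "Suc k < n"
  have "(\<Sum>\<mu>\<in>A. c \<mu> * g \<mu> (swp k \<alpha>)) = (\<Sum>\<mu>\<in>A. c \<mu> * g \<mu> \<alpha>)"
    using assms(2) k unfolding symf_def by (intro sum.cong) auto
  then show "f (swp k \<alpha>) - (\<Sum>\<mu>\<in>A. c \<mu> * g \<mu> (swp k \<alpha>)) = f \<alpha> - (\<Sum>\<mu>\<in>A. c \<mu> * g \<mu> \<alpha>)"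
    using assms(1) k unfolding symf_def by simp
qed

section \<open>Potential\<close>

definition w :: "nat \<Rightarrow> (nat \<Rightarrow> nat) \<Rightarrow> nat" where
  "w n \<alpha> = (\<Sum>k<n. P (Suc k) \<alpha>)"

lemma P_Suc: "P (Suc k) a = P k a + a k"
  unfolding P_def by simp

lemma P_swp_low: "k \<le> i \<Longrightarrow> P k (swp i \<alpha>) = P k \<alpha>"
  unfolding P_def swp_def by (intro sum.cong) auto

lemma P_swp: "P k (swp i \<alpha>) = (if k = Suc i then P k \<alpha> + \<alpha> (Suc i) - \<alpha> i else P k \<alpha>)"
proof (induction k)
  case 0 then show ?case unfolding P_def by simp
next
  case (Suc k)
  show ?case
  proof (cases "k = Suc i")
    case True
    have "P (Suc k) (swp i \<alpha>) = P k (swp i \<alpha>) + swp i \<alpha> k" by (rule P_Suc)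
    also have "P k (swp i \<alpha>) = P i \<alpha> + \<alpha> (Suc i)"
      using True P_swp_low[of i i \<alpha>] P_Suc[of "i" "swp i \<alpha>"] by (simp add: swp_def)
    finally show ?thesis using True P_Suc[of k \<alpha>] P_Suc[of i \<alpha>] by (simp add: swp_def)
  next
    case False
    show ?thesis
    proof (cases "k = i")
      case True
      then show ?thesis using Suc unfolding P_Suc swp_def by (simp add: P_def)
    next
      case False
      have "swp i \<alpha> k = \<alpha> k" using False \<open>k \<noteq> Suc i\<close> by (simp add: swp_def)
      then show ?thesis using Suc \<open>k \<noteq> Suc i\<close> False P_Suc[of k \<alpha>] P_Suc[of k "swp i \<alpha>"] by simp
    qed
  qed
qed

lemma P_ge: "a i \<le> P (Suc i) a"
  unfolding P_Suc by simp

lemma w_swp: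
  assumes "Suc i < n"
  shows "w n (swp i \<alpha>) + \<alpha> i = w n \<alpha> + \<alpha> (Suc i)"
proof -
  have iA: "i \<in> {..<n}" using assms by simp
  have "w n (swp i \<alpha>) = P (Suc i) (swp i \<alpha>) + (\<Sum>k\<in>{..<n} - {i}. P (Suc k) (swp i \<alpha>))"
    unfolding w_def by (rule sum.remove[OF _ iA]) simp
  also have "(\<Sum>k\<in>{..<n} - {i}. P (Suc k) (swp i \<alpha>)) = (\<Sum>k\<in>{..<n} - {i}. P (Suc k) \<alpha>)"
    by (rule sum.cong) (auto simp: P_swp)
  finally have a: "w n (swp i \<alpha>) = P (Suc i) (swp i \<alpha>) + (\<Sum>k\<in>{..<n} - {i}. P (Suc k) \<alpha>)" .
  have b: "w n \<alpha> = P (Suc i) \<alpha> + (\<Sum>k\<in>{..<n} - {i}. P (Suc k) \<alpha>)"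
    unfolding w_def by (rule sum.remove[OF _ iA]) simp
  have "P (Suc i) (swp i \<alpha>) + \<alpha> i = P (Suc i) \<alpha> + \<alpha> (Suc i)"
    using P_swp[of "Suc i" i \<alpha>] P_ge[of \<alpha> i] by simp
  then show ?thesis using a b by simp
qed

lemma Dn_swp: "Dn n \<alpha> \<Longrightarrow> Suc i < n \<Longrightarrow> Dn n (swp i \<alpha>)"
  unfolding Dn_def using P_swp[of n i \<alpha>] by (auto simp: swp_def)

lemma Dn_P_le: "Dn n \<alpha> \<Longrightarrow> P k \<alpha> \<le> n"
proof -
  assume D: "Dn n \<alpha>"
  have "P k \<alpha> \<le> P (max k n) \<alpha>" unfolding P_def by (rule sum_mono2) auto
  also have "P (max k n) \<alpha> = P n \<alpha>"
    unfolding P_def by (rule sum.mono_neutral_right) (use D in \<open>auto simp: Dn_def\<close>)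
  finally show ?thesis using D unfolding Dn_def by simp
qed

lemma w_bound: "Dn n \<alpha> \<Longrightarrow> w n \<alpha> \<le> n * n"
proof -
  assume D: "Dn n \<alpha>"
  have "w n \<alpha> \<le> (\<Sum>k<n. n)" unfolding w_def by (rule sum_mono) (rule Dn_P_le[OF D])
  then show ?thesis by simp
qed

lemma sort_exists:
  assumes "symf n f" "Dn n \<alpha>"
  shows "\<exists>\<beta>. Dn n \<beta> \<and> dec \<beta> \<and> f \<beta> = f \<alpha> \<and> w n \<alpha> \<le> w n \<beta> \<and> (\<not> dec \<alpha> \<longrightarrow> w n \<alpha> < w n \<beta>)"
  using assms(2)
proof (induction "n * n - w n \<alpha>" arbitrary: \<alpha> rule: less_induct)
  case less
  show ?case
  proof (cases "dec \<alpha>")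
    case True then show ?thesis using less.prems by blast
  next
    case False
    then obtain i where i: "\<alpha> i < \<alpha> (Suc i)" unfolding dec_def by (auto simp: not_le)
    have "Suc i < n"
    proof (rule ccontr)
      assume "\<not> Suc i < n"
      then have "\<alpha> (Suc i) = 0" using less.prems unfolding Dn_def by simp
      with i show False by simp
    qed
    note si = this
    let ?a = "swp i \<alpha>"
    have D': "Dn n ?a" using Dn_swp[OF less.prems si] .
    have ww: "w n ?a + \<alpha> i = w n \<alpha> + \<alpha> (Suc i)" using w_swp[OF si] .
    have lt: "w n \<alpha> < w n ?a" using ww i by simp
    have "n * n - w n ?a < n * n - w n \<alpha>" using lt w_bound[OF D'] by simp
    from less.hyps[OF this D'] obtain \<beta> where \<beta>: "Dn n \<beta>" "dec \<beta>" "f \<beta> = f ?a" "w n ?a \<le> w n \<beta>" by blast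
    have "f ?a = f \<alpha>" using assms(1) si unfolding symf_def by blast
    then show ?thesis using \<beta> lt by (intro exI[of _ \<beta>]) auto
  qed
qed

lemma dom_w:
  assumes "\<And>k. P k \<alpha> \<le> P k lam"
  shows "w n \<alpha> \<le> w n lam"
  unfolding w_def by (rule sum_mono) (rule assms)

lemma dom_w_eq:
  assumes "\<And>k. P k \<alpha> \<le> P k lam" "w n \<alpha> = w n lam" "i < n"
  shows "\<alpha> i = lam i"
proof -
  have e: "P (Suc k) \<alpha> = P (Suc k) lam" if "k < n" for k
    using sum_le_eq_each[of "{..<n}" "\<lambda>k. P (Suc k) \<alpha>" "\<lambda>k. P (Suc k) lam" k] assms(1,2) that
    unfolding w_def by simp
  show ?thesis
  proof (cases i)
    case 0 then show ?thesis using e[of 0] assms(3) unfolding P_def by simp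
  next
    case (Suc j)
    have "P (Suc i) \<alpha> = P (Suc i) lam" "P i \<alpha> = P i lam" using e[of i] e[of j] assms(3) Suc by auto
    then show ?thesis using P_Suc[of i \<alpha>] P_Suc[of i lam] by simp
  qed
qed

lemma Kv_w:
  assumes "\<mu> \<in> partitions n" "scoeff n \<mu> \<alpha> \<noteq> 0"
  shows "w n \<alpha> \<le> w n (pv \<mu>)" "w n \<alpha> = w n (pv \<mu>) \<Longrightarrow> \<alpha> = pv \<mu>"
proof -
  have sh: "shape n (pv \<mu>)" using assms pv_shape unfolding partitions_def by simp
  have K: "Kv n (pv \<mu>) \<alpha> \<noteq> 0" using assms(2) unfolding scoeff_Kv by simp
  show "w n \<alpha> \<le> w n (pv \<mu>)" using Kv_dom[OF K sh] by (intro dom_w)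
  assume "w n \<alpha> = w n (pv \<mu>)"
  then have "\<alpha> i = pv \<mu> i" if "i < n" for i using dom_w_eq[OF Kv_dom[OF K sh]] that by blast
  moreover have "\<alpha> i = pv \<mu> i" if "n \<le> i" for i
    using Kv_out[OF K sh that] sh that unfolding shape_def by simp
  ultimately show "\<alpha> = pv \<mu>" by (meson ext not_le)
qed

lemma scoeff_diag: "\<mu> \<in> partitions n \<Longrightarrow> scoeff n \<mu> (pv \<mu>) = 1"
  unfolding scoeff_Kv using Kv_diag pv_shape unfolding partitions_def by simp


abbreviation Pn :: "nat \<Rightarrow> nat list set" where "Pn n \<equiv> partitions n"

definition expands :: "nat \<Rightarrow> ((nat \<Rightarrow> nat) \<Rightarrow> int) \<Rightarrow> (nat list \<Rightarrow> int) \<Rightarrow> bool" where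
  "expands n f c \<longleftrightarrow> (\<forall>\<mu>. \<mu> \<notin> partitions n \<longrightarrow> c \<mu> = 0) \<and>
      (\<forall>\<alpha>. f \<alpha> = (\<Sum>\<mu>\<in>partitions n. c \<mu> * scoeff n \<mu> \<alpha>))"

lemma sum_single:
  assumes "finite A" "a \<in> A" "\<forall>x\<in>A - {a}. g x = (0::'b::comm_monoid_add)"
  shows "sum g A = g a"
  using sum.remove[OF assms(1,2), of g] sum.neutral[OF assms(3)] by simp

lemma expand_step:
  assumes "\<forall>f. symf n f \<and> (\<forall>\<alpha>. f \<alpha> \<noteq> 0 \<longrightarrow> w n \<alpha> < m) \<longrightarrow> (\<exists>c. expands n f c)"
    and f: "symf n f" and fb: "\<forall>\<alpha>. f \<alpha> \<noteq> 0 \<longrightarrow> w n \<alpha> < Suc m"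
  shows "\<exists>c. expands n f c"
proof -
  define c1 where "c1 \<mu> = (if \<mu> \<in> Pn n \<and> w n (pv \<mu>) = m then f (pv \<mu>) else 0)" for \<mu>
  define g where "g \<alpha> = f \<alpha> - (\<Sum>\<mu>\<in>Pn n. c1 \<mu> * scoeff n \<mu> \<alpha>)" for \<alpha>
  have gs: "symf n g" unfolding g_def by (rule symf_lincomb[OF f symf_scoeff])
  have A: "g \<alpha> = 0" if wa: "m < w n \<alpha>" for \<alpha>
  proof -
    have "f \<alpha> = 0" using fb wa by (meson not_less_eq)
    moreover have "c1 \<mu> * scoeff n \<mu> \<alpha> = 0" if "\<mu> \<in> Pn n" for \<mu>
    proof (cases "c1 \<mu> = 0")
      case False
      then have "w n (pv \<mu>) = m" unfolding c1_def by (auto split: if_splits)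
      then have "scoeff n \<mu> \<alpha> = 0" using Kv_w(1)[OF that] wa by (meson leD)
      then show ?thesis by simp
    qed simp
    ultimately show ?thesis unfolding g_def by (simp add: sum.neutral)
  qed
  have B: "g \<alpha> = 0" if wa: "w n \<alpha> = m" and d: "dec \<alpha>" and D: "Dn n \<alpha>" for \<alpha>
  proof -
    obtain lz where l0: "lz \<in> Pn n" "pv lz = \<alpha>" using dec_part[OF d D] by blast
    have "(\<Sum>\<mu>\<in>Pn n. c1 \<mu> * scoeff n \<mu> \<alpha>) = c1 lz * scoeff n lz \<alpha>"
    proof (rule sum_single[OF finite_partitions l0(1)])
      show "\<forall>\<mu>\<in>Pn n - {lz}. c1 \<mu> * scoeff n \<mu> \<alpha> = 0"
      proof
        fix \<mu> assume \<mu>: "\<mu> \<in> Pn n - {lz}"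
        show "c1 \<mu> * scoeff n \<mu> \<alpha> = 0"
        proof (rule ccontr)
          assume "c1 \<mu> * scoeff n \<mu> \<alpha> \<noteq> 0"
          then have c: "c1 \<mu> \<noteq> 0" "scoeff n \<mu> \<alpha> \<noteq> 0" by auto
          then have "w n (pv \<mu>) = m" unfolding c1_def by (auto split: if_splits)
          then have "\<alpha> = pv \<mu>" using Kv_w(2)[of \<mu> n \<alpha>] \<mu> c wa by auto
          then have "\<mu> = lz" using partitions_pv_inj[of \<mu> n lz] \<mu> l0 by auto
          with \<mu> show False by simp
        qed
      qed
    qed
    also have "\<dots> = f \<alpha>" using scoeff_diag[OF l0(1)] l0 wa unfolding c1_def by simp
    finally show ?thesis unfolding g_def by simp
  qed
  have gb: "\<forall>\<alpha>. g \<alpha> \<noteq> 0 \<longrightarrow> w n \<alpha> < m"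
  proof (intro allI impI)
    fix \<alpha> assume ga: "g \<alpha> \<noteq> 0"
    then have D: "Dn n \<alpha>" using gs unfolding symf_def by blast
    show "w n \<alpha> < m"
    proof (rule ccontr)
      assume "\<not> w n \<alpha> < m"
      then consider "m < w n \<alpha>" | "w n \<alpha> = m" by linarith
      then show False
      proof cases
        case 1 then show False using A ga by simp
      next
        case 2
        show False
        proof (cases "dec \<alpha>")
          case True then show False using B[OF 2 True D] ga by simp
        next
          case False
          obtain \<beta> where \<beta>: "Dn n \<beta>" "dec \<beta>" "g \<beta> = g \<alpha>" "w n \<alpha> < w n \<beta>"
            using sort_exists[OF gs D] False by blast
          then show False using A[of \<beta>] 2 ga by simp
        qed
      qed
    qed
  qed
  obtain c2 where c2: "expands n g c2" using assms(1) gs gb by blast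
  have "expands n f (\<lambda>\<mu>. c1 \<mu> + c2 \<mu>)"
    unfolding expands_def
  proof (intro conjI allI impI)
    fix \<mu> assume "\<mu> \<notin> Pn n"
    then show "c1 \<mu> + c2 \<mu> = 0" using c2 unfolding expands_def c1_def by simp
  next
    fix \<alpha>
    have "f \<alpha> = g \<alpha> + (\<Sum>\<mu>\<in>Pn n. c1 \<mu> * scoeff n \<mu> \<alpha>)" unfolding g_def by simp
    also have "g \<alpha> = (\<Sum>\<mu>\<in>Pn n. c2 \<mu> * scoeff n \<mu> \<alpha>)" using c2 unfolding expands_def by blast
    finally show "f \<alpha> = (\<Sum>\<mu>\<in>Pn n. (c1 \<mu> + c2 \<mu>) * scoeff n \<mu> \<alpha>)"
      by (simp add: sum.distrib distrib_right)
  qed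
  then show ?thesis by blast
qed

lemma expand_bounded:
  "\<forall>f. symf n f \<and> (\<forall>\<alpha>. f \<alpha> \<noteq> 0 \<longrightarrow> w n \<alpha> < m) \<longrightarrow> (\<exists>c. expands n f c)"
proof (induction m)
  case 0
  show ?case
  proof (intro allI impI)
    fix f :: "(nat \<Rightarrow> nat) \<Rightarrow> int" assume "symf n f \<and> (\<forall>\<alpha>. f \<alpha> \<noteq> 0 \<longrightarrow> w n \<alpha> < 0)"
    then have "f = (\<lambda>\<alpha>. 0)" by auto
    then show "\<exists>c. expands n f c" unfolding expands_def by (intro exI[of _ "\<lambda>\<mu>. 0"]) simp
  qed
next
  case (Suc m)
  then show ?case using expand_step[OF Suc.IH] by blast
qed

theorem expand_exists:
  assumes "symf n f"
  shows "\<exists>c. expands n f c"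
proof -
  have "\<forall>\<alpha>. f \<alpha> \<noteq> 0 \<longrightarrow> w n \<alpha> < Suc (n * n)"
    using assms w_bound unfolding symf_def by (meson le_imp_less_Suc)
  then show ?thesis using expand_bounded assms by blast
qed

theorem expand_unique0:
  assumes "\<forall>\<mu>. \<mu> \<notin> Pn n \<longrightarrow> c \<mu> = 0" "\<forall>\<alpha>. (\<Sum>\<mu>\<in>Pn n. c \<mu> * scoeff n \<mu> \<alpha>) = 0"
  shows "c \<mu> = 0"
proof (rule ccontr)
  assume nz: "c \<mu> \<noteq> 0"
  define A where "A = {\<mu> \<in> Pn n. c \<mu> \<noteq> 0}"
  have muA: "\<mu> \<in> A" using nz assms(1) unfolding A_def by auto
  have fA: "finite A" unfolding A_def using finite_partitions by simp
  define M where "M = Max ((\<lambda>\<mu>. w n (pv \<mu>)) ` A)"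
  have "M \<in> (\<lambda>\<mu>. w n (pv \<mu>)) ` A" unfolding M_def using fA muA by (intro Max_in) auto
  then obtain \<mu>0 where m0: "\<mu>0 \<in> A" "w n (pv \<mu>0) = M" by auto
  have le: "\<And>\<nu>. \<nu> \<in> A \<Longrightarrow> w n (pv \<nu>) \<le> M" unfolding M_def using fA by (intro Max_ge) auto
  have p0: "\<mu>0 \<in> Pn n" using m0 unfolding A_def by simp
  have "(\<Sum>\<nu>\<in>Pn n. c \<nu> * scoeff n \<nu> (pv \<mu>0)) = c \<mu>0 * scoeff n \<mu>0 (pv \<mu>0)"
  proof (rule sum_single[OF finite_partitions p0])
    show "\<forall>\<nu>\<in>Pn n - {\<mu>0}. c \<nu> * scoeff n \<nu> (pv \<mu>0) = 0"
    proof
      fix \<nu> assume \<nu>: "\<nu> \<in> Pn n - {\<mu>0}"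
      show "c \<nu> * scoeff n \<nu> (pv \<mu>0) = 0"
      proof (rule ccontr)
        assume "c \<nu> * scoeff n \<nu> (pv \<mu>0) \<noteq> 0"
        then have c: "c \<nu> \<noteq> 0" "scoeff n \<nu> (pv \<mu>0) \<noteq> 0" by auto
        then have "\<nu> \<in> A" using \<nu> unfolding A_def by simp
        then have "w n (pv \<nu>) \<le> w n (pv \<mu>0)" using le m0 by simp
        moreover have "w n (pv \<mu>0) \<le> w n (pv \<nu>)" using Kv_w(1)[of \<nu> n "pv \<mu>0"] \<nu> c by simp
        ultimately have "pv \<mu>0 = pv \<nu>" using Kv_w(2)[of \<nu> n "pv \<mu>0"] \<nu> c by simp
        then have "\<nu> = \<mu>0" using partitions_pv_inj[of \<nu> n \<mu>0] \<nu> p0 by auto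
        with \<nu> show False by simp
      qed
    qed
  qed
  then have "c \<mu>0 = 0" using assms(2) scoeff_diag[OF p0] by simp
  with m0 show False unfolding A_def by simp
qed

theorem schur_coeff_eq:
  assumes "expands n f c"
  shows "schur_coeff n f la = c la"
proof -
  have "(THE c. (\<forall>\<mu>. \<mu> \<notin> partitions n \<longrightarrow> c \<mu> = 0) \<and>
      (\<forall>\<alpha>. f \<alpha> = (\<Sum>\<mu>\<in>partitions n. c \<mu> * scoeff n \<mu> \<alpha>))) = c"
  proof (rule the1_equality)
    show "\<exists>!c. (\<forall>\<mu>. \<mu> \<notin> partitions n \<longrightarrow> c \<mu> = 0) \<and>
      (\<forall>\<alpha>. f \<alpha> = (\<Sum>\<mu>\<in>partitions n. c \<mu> * scoeff n \<mu> \<alpha>))"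
    proof (rule ex1I[of _ c])
      show "(\<forall>\<mu>. \<mu> \<notin> partitions n \<longrightarrow> c \<mu> = 0) \<and> (\<forall>\<alpha>. f \<alpha> = (\<Sum>\<mu>\<in>partitions n. c \<mu> * scoeff n \<mu> \<alpha>))"
        using assms unfolding expands_def by blast
    next
      fix c' assume c': "(\<forall>\<mu>. \<mu> \<notin> partitions n \<longrightarrow> c' \<mu> = 0) \<and>
        (\<forall>\<alpha>. f \<alpha> = (\<Sum>\<mu>\<in>partitions n. c' \<mu> * scoeff n \<mu> \<alpha>))"
      have "c' \<mu> - c \<mu> = 0" for \<mu>
      proof (rule expand_unique0[of n "\<lambda>\<mu>. c' \<mu> - c \<mu>"])
        show "\<forall>\<mu>. \<mu> \<notin> Pn n \<longrightarrow> c' \<mu> - c \<mu> = 0" using c' assms unfolding expands_def by simp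
        show "\<forall>\<alpha>. (\<Sum>\<mu>\<in>Pn n. (c' \<mu> - c \<mu>) * scoeff n \<mu> \<alpha>) = 0"
          using c' assms unfolding expands_def by (simp add: sum_subtractf left_diff_distrib)
      qed
      then show "c' = c" by (auto simp: fun_eq_iff)
    qed
  qed (use assms in \<open>simp add: expands_def\<close>)
  then show ?thesis unfolding schur_coeff_def by simp
qed


definition pcset :: "nat \<Rightarrow> nat set \<Rightarrow> (nat \<Rightarrow> nat) \<Rightarrow> (nat \<Rightarrow> nat) \<Rightarrow> (nat \<Rightarrow> nat) set" where
  "pcset N J wt \<alpha> = {f. (\<forall>j\<in>J. f j < N) \<and> (\<forall>j. j \<notin> J \<longrightarrow> f j = 0) \<and>
      (\<forall>i. (\<Sum>j\<in>{j\<in>J. f j = i}. wt j) = \<alpha> i)}"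

definition pc :: "nat \<Rightarrow> nat set \<Rightarrow> (nat \<Rightarrow> nat) \<Rightarrow> (nat \<Rightarrow> nat) \<Rightarrow> nat" where
  "pc N J wt \<alpha> = card (pcset N J wt \<alpha>)"

lemma pcoeff_pc: "pcoeff N \<mu> \<alpha> = int (pc N {..<length \<mu>} (nth \<mu>) \<alpha>)"
proof -
  have "{f :: nat \<Rightarrow> nat.
      (\<forall>j. j < length \<mu> \<longrightarrow> f j < N) \<and> (\<forall>j. length \<mu> \<le> j \<longrightarrow> f j = 0) \<and>
      (\<forall>i. (\<Sum>j | j < length \<mu> \<and> f j = i. \<mu> ! j) = \<alpha> i)} = pcset N {..<length \<mu>} (nth \<mu>) \<alpha>"
    unfolding pcset_def by (auto simp: not_less)
  then show ?thesis unfolding pcoeff_def pc_def by simp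
qed

definition tr :: "nat \<Rightarrow> nat \<Rightarrow> nat" where
  "tr k x = (if x = k then Suc k else if x = Suc k then k else x)"

lemma tr_tr[simp]: "tr k (tr k x) = x" unfolding tr_def by auto

lemma swp_tr: "swp k \<alpha> i = \<alpha> (tr k i)" unfolding swp_def tr_def by auto

lemma tr_lt: "Suc k < N \<Longrightarrow> x < N \<Longrightarrow> tr k x < N" unfolding tr_def by auto

definition trf :: "nat \<Rightarrow> nat set \<Rightarrow> (nat \<Rightarrow> nat) \<Rightarrow> nat \<Rightarrow> nat" where
  "trf k J f = (\<lambda>j. if j \<in> J then tr k (f j) else 0)"

lemma trf_pcset:
  assumes "f \<in> pcset N J wt \<alpha>" "Suc k < N"
  shows "trf k J f \<in> pcset N J wt (swp k \<alpha>)"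
proof -
  have "{j \<in> J. trf k J f j = i} = {j \<in> J. f j = tr k i}" for i
    unfolding trf_def by (auto simp: tr_def split: if_splits)
  then show ?thesis using assms unfolding pcset_def swp_tr by (auto simp: trf_def tr_lt)
qed

lemma trf_trf: "f \<in> pcset N J wt \<alpha> \<Longrightarrow> trf k J (trf k J f) = f"
  unfolding trf_def pcset_def by (auto simp: fun_eq_iff)

lemma pc_swp:
  assumes "Suc k < N"
  shows "pc N J wt (swp k \<alpha>) = pc N J wt \<alpha>"
  unfolding pc_def
proof (rule sym, rule bij_betw_same_card[of "trf k J"], rule bij_betw_byWitness[where f' = "trf k J"])
  show "\<forall>a\<in>pcset N J wt \<alpha>. trf k J (trf k J a) = a" using trf_trf by blast
  show "\<forall>a\<in>pcset N J wt (swp k \<alpha>). trf k J (trf k J a) = a" using trf_trf by blast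
  show "trf k J ` pcset N J wt \<alpha> \<subseteq> pcset N J wt (swp k \<alpha>)" using trf_pcset assms by blast
  show "trf k J ` pcset N J wt (swp k \<alpha>) \<subseteq> pcset N J wt \<alpha>"
    using trf_pcset[of _ N J wt "swp k \<alpha>" k] assms by auto
qed

lemma pc_support:
  assumes "pc N J wt \<alpha> \<noteq> 0" "finite J"
  shows "Dn N \<alpha> \<or> (\<Sum>j\<in>J. wt j) \<noteq> N"
proof -
  obtain f where f: "f \<in> pcset N J wt \<alpha>" using assms(1) unfolding pc_def by fastforce
  have fl: "\<forall>j\<in>J. f j < N" and fc: "\<forall>i. (\<Sum>j\<in>{j\<in>J. f j = i}. wt j) = \<alpha> i"
    using f unfolding pcset_def by auto
  have out: "\<alpha> i = 0" if "N \<le> i" for i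
  proof -
    have e: "{j\<in>J. f j = i} = {}" using fl that by fastforce
    have "(\<Sum>j\<in>{j\<in>J. f j = i}. wt j) = 0" by (subst e) simp
    then show ?thesis using fc by simp
  qed
  have "P N \<alpha> = (\<Sum>i<N. \<Sum>j\<in>{j\<in>J. f j = i}. wt j)" unfolding P_def using fc by simp
  also have "\<dots> = (\<Sum>j\<in>J. wt j)"
  proof (rule sum.group)
    show "finite J" by (rule assms(2))
    show "finite {..<N}" by simp
    show "f ` J \<subseteq> {..<N}" using fl by auto
  qed
  finally show ?thesis using out unfolding Dn_def by auto
qed

lemma symf_pcoeff:
  assumes "\<mu> \<in> partitions n"
  shows "symf n (pcoeff n \<mu>)"
proof -
  have sl: "(\<Sum>j\<in>{..<length \<mu>}. \<mu> ! j) = n"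
    using assms unfolding partitions_def is_partition_def by (simp add: sum_list_sum_nth atLeast0LessThan)
  show ?thesis
    unfolding symf_def
  proof (intro conjI allI impI)
    fix \<alpha> assume "pcoeff n \<mu> \<alpha> \<noteq> 0"
    then have "pc n {..<length \<mu>} (nth \<mu>) \<alpha> \<noteq> 0" unfolding pcoeff_pc by simp
    from pc_support[OF this] sl show "Dn n \<alpha>" by simp
  next
    fix k \<alpha> assume "Suc k < n"
    then show "pcoeff n \<mu> (swp k \<alpha>) = pcoeff n \<mu> \<alpha>" unfolding pcoeff_pc using pc_swp by simp
  qed
qed

lemma symf_psi:
  assumes "T \<subseteq> partitions n"
  shows "symf n (psi n T)"
proof -
  have fT: "finite T" using finite_subset[OF assms finite_partitions] .
  have "symf n (\<lambda>\<alpha>. (\<lambda>\<alpha>. 0) \<alpha> - (\<Sum>\<mu>\<in>T. (-1) * pcoeff n \<mu> \<alpha>))"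
  proof (rule symf_lincomb)
    show "symf n (\<lambda>\<alpha>. 0)" unfolding symf_def by simp
    show "\<And>\<mu>. \<mu> \<in> T \<Longrightarrow> symf n (pcoeff n \<mu>)" using assms symf_pcoeff by blast
  qed
  then show ?thesis unfolding psi_def by (simp add: sum_negf)
qed


lemma pv_single: "pv [a] = (\<lambda>i. if i = 0 then a else 0)"
  unfolding pv_def by (auto simp: fun_eq_iff)

lemma pv_two: "pv [a, b] = (\<lambda>i. if i = 0 then a else if i = 1 then b else 0)"
  unfolding pv_def by (auto simp: fun_eq_iff nth_Cons split: nat.splits)

lemma P1_pv: "P (Suc 0) a = a 0" unfolding P_def by simp

lemma pos_sum_le1:
  fixes r :: "nat list"
  assumes "\<forall>x\<in>set r. 0 < x" "sum_list r \<le> 1"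
  shows "r = [] \<or> r = [1]"
proof (cases r)
  case Nil then show ?thesis by simp
next
  case (Cons a r')
  have "0 < a" "a + sum_list r' \<le> 1" using assms Cons by auto
  then have "a = 1" "sum_list r' = 0" by arith+
  then have "r' = []" using assms Cons by (cases r') auto
  then show ?thesis using Cons \<open>a = 1\<close> by simp
qed

lemma part_first_big:
  assumes "\<nu> \<in> partitions n" "n - 1 \<le> pv \<nu> 0" "1 \<le> n"
  shows "\<nu> = [n] \<or> (\<nu> = [n - 1, 1] \<and> 2 \<le> n)"
proof -
  have ip: "is_partition n \<nu>" using assms unfolding partitions_def by simp
  obtain x r where \<nu>: "\<nu> = x # r" using ip assms(3) unfolding is_partition_def by (cases \<nu>) auto
  have x: "x = pv \<nu> 0" unfolding \<nu> pv_def by simp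
  have s: "x + sum_list r = n" using ip unfolding is_partition_def \<nu> by simp
  have pos: "\<forall>y\<in>set r. 0 < y" using ip unfolding is_partition_def \<nu> by simp
  have xpos: "0 < x" using ip unfolding is_partition_def \<nu> by simp
  have "sum_list r \<le> 1" using s assms(2) x by linarith
  then have "r = [] \<or> r = [1]" using pos_sum_le1[OF pos] by simp
  then show ?thesis using s \<nu> xpos by auto
qed

lemma single_part: "1 \<le> n \<Longrightarrow> [n] \<in> partitions n"
  unfolding partitions_def is_partition_def by simp

lemma hook_part: "2 \<le> n \<Longrightarrow> [n - 1, 1] \<in> partitions n"
  unfolding partitions_def is_partition_def by simp

lemma Dn_pv_single: "Dn n (pv [n])" unfolding Dn_def P_def pv_single
  by (cases n) (auto simp: lessThan_Suc_eq_insert_0)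

lemma row_chain:
  assumes "Dn n \<alpha>" "1 \<le> n"
  shows "chainset n (pv [n]) \<alpha> = {\<lambda>k i. if i = 0 then P k \<alpha> else 0}"
proof -
  let ?G = "\<lambda>k i. if i = 0 then P k \<alpha> else 0"
  have Pk: "N \<le> k \<Longrightarrow> P k \<alpha> = P N \<alpha>" if "N = n" for N k
    unfolding P_def using assms(1) that by (intro sum.mono_neutral_right) (auto simp: Dn_def)
  have szG: "sz n (\<lambda>i. if i = 0 then x else 0) = x" for x
    unfolding sz_def using assms(2) by (cases n) (auto simp: lessThan_Suc_eq_insert_0)
  have sh: "shape n (pv [n])" unfolding shape_def pv_single using assms(2) by auto
  show ?thesis
  proof
    show "{?G} \<subseteq> chainset n (pv [n]) \<alpha>"
      unfolding chainset_def
    proof (clarify, intro conjI allI impI)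
      show "?G 0 = (\<lambda>i. 0)" unfolding P_def by auto
    next
      fix k assume "n \<le> k"
      then show "?G k = pv [n]" unfolding pv_single using Pk[of n k] assms(1) unfolding Dn_def by auto
    next
      fix k assume "k < n"
      show "hs (?G k) (?G (Suc k))" unfolding hs_def P_Suc by auto
    next
      fix k show "\<alpha> k = sz n (?G (Suc k)) - sz n (?G k)" unfolding szG P_Suc by simp
    qed
    show "chainset n (pv [n]) \<alpha> \<subseteq> {?G}"
    proof
      fix G assume G: "G \<in> chainset n (pv [n]) \<alpha>"
      have "G k i = ?G k i" for k i
      proof (cases "i = 0")
        case False
        then show ?thesis using chain_le[OF G, of k i] unfolding pv_single by simp
      next
        case True
        have "G k j = (if j = 0 then G k 0 else 0)" for j
          using chain_le[OF G, of k j] unfolding pv_single by (cases "j = 0") auto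
        then have "G k = (\<lambda>i. if i = 0 then G k 0 else 0)" by (auto simp: fun_eq_iff)
        then have "sz n (G k) = G k 0" using szG by metis
        then show ?thesis using chain_sz[OF G, of k] True by simp
      qed
      then show "G \<in> {?G}" by (auto simp: fun_eq_iff)
    qed
  qed
qed

lemma Kv_row:
  assumes "Dn n \<alpha>" "1 \<le> n"
  shows "Kv n (pv [n]) \<alpha> = 1"
proof -
  have sh: "shape n (pv [n])" unfolding shape_def pv_single using assms(2) by auto
  show ?thesis using Kv_chains[OF sh] row_chain[OF assms] by simp
qed

lemma scoeff_at_row:
  assumes "\<nu> \<in> partitions n" "2 \<le> n"
  shows "scoeff n \<nu> (pv [n]) = (if \<nu> = [n] then 1 else 0)"
proof (cases "scoeff n \<nu> (pv [n]) = 0")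
  case False
  have sh: "shape n (pv \<nu>)" using assms pv_shape unfolding partitions_def by simp
  have "P (Suc 0) (pv [n]) \<le> P (Suc 0) (pv \<nu>)" using Kv_dom[OF _ sh] False unfolding scoeff_Kv by simp
  then have "n \<le> pv \<nu> 0" unfolding P1_pv pv_single by simp
  moreover have "\<nu> = [n] \<or> \<nu> = [n - 1, 1]" using part_first_big[OF assms(1)] assms(2) calculation by fastforce
  ultimately have "\<nu> = [n]" using assms(2) by (auto simp: pv_two)
  then show ?thesis using scoeff_diag[OF single_part] assms(2) by simp
next
  case True
  moreover have "\<nu> \<noteq> [n]" using True scoeff_diag[OF single_part, of n] assms(2) by auto
  ultimately show ?thesis by simp
qed

lemma scoeff_at_hook:
  assumes "\<nu> \<in> partitions n" "2 \<le> n"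
  shows "scoeff n \<nu> (pv [n - 1, 1]) = (if \<nu> = [n] \<or> \<nu> = [n - 1, 1] then 1 else 0)"
proof -
  have D: "Dn n (pv [n - 1, 1])" using pv_Dn[OF hook_part[OF assms(2)]] .
  have r: "scoeff n [n] (pv [n - 1, 1]) = 1" unfolding scoeff_Kv using Kv_row[OF D] assms(2) by simp
  have h: "scoeff n [n - 1, 1] (pv [n - 1, 1]) = 1" using scoeff_diag[OF hook_part[OF assms(2)]] .
  show ?thesis
  proof (cases "scoeff n \<nu> (pv [n - 1, 1]) = 0")
    case False
    have sh: "shape n (pv \<nu>)" using assms pv_shape unfolding partitions_def by simp
    have "P (Suc 0) (pv [n - 1, 1]) \<le> P (Suc 0) (pv \<nu>)" using Kv_dom[OF _ sh] False unfolding scoeff_Kv by simp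
    then have "n - 1 \<le> pv \<nu> 0" unfolding P1_pv pv_two by simp
    then have "\<nu> = [n] \<or> \<nu> = [n - 1, 1]" using part_first_big[OF assms(1)] assms(2) by fastforce
    then show ?thesis using r h by auto
  next
    case True
    then have "\<nu> \<noteq> [n] \<and> \<nu> \<noteq> [n - 1, 1]" using r h by auto
    with True show ?thesis by simp
  qed
qed

lemma coeff_hook_functional:
  assumes "expands n f c" "2 \<le> n"
  shows "c [n - 1, 1] = f (pv [n - 1, 1]) - f (pv [n])"
proof -
  have "f (pv [n - 1, 1]) - f (pv [n]) =
      (\<Sum>\<nu>\<in>partitions n. c \<nu> * (scoeff n \<nu> (pv [n - 1, 1]) - scoeff n \<nu> (pv [n])))"
    using assms(1) unfolding expands_def by (simp add: sum_subtractf right_diff_distrib)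
  also have "\<dots> = c [n - 1, 1] * (scoeff n [n - 1, 1] (pv [n - 1, 1]) - scoeff n [n - 1, 1] (pv [n]))"
  proof (rule sum_single[OF finite_partitions hook_part[OF assms(2)]], rule ballI)
    fix \<nu> assume "\<nu> \<in> partitions n - {[n - 1, 1]}"
    then show "c \<nu> * (scoeff n \<nu> (pv [n - 1, 1]) - scoeff n \<nu> (pv [n])) = 0"
      using scoeff_at_row[of \<nu> n] scoeff_at_hook[of \<nu> n] assms(2) by auto
  qed
  also have "\<dots> = c [n - 1, 1]"
    using scoeff_at_row[OF hook_part[OF assms(2)] assms(2)] scoeff_at_hook[OF hook_part[OF assms(2)] assms(2)]
      assms(2) by auto
  finally show ?thesis by simp
qed


lemma block_pos:
  assumes "finite J" "j \<in> J" "f j = i" "\<forall>j\<in>J. 0 < (wt j :: nat)"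
  shows "0 < (\<Sum>j'\<in>{j'\<in>J. f j' = i}. wt j')"
proof -
  have "wt j \<le> (\<Sum>j'\<in>{j'\<in>J. f j' = i}. wt j')"
    by (rule member_le_sum) (use assms in auto)
  then show ?thesis using assms by (metis gr0I le_zero_eq)
qed

lemma pcset_row:
  assumes "finite J" "\<forall>j\<in>J. 0 < wt j" "sum wt J = n" "1 \<le> n"
  shows "pcset n J wt (pv [n]) = {\<lambda>j. 0}"
proof
  show "pcset n J wt (pv [n]) \<subseteq> {\<lambda>j. 0}"
  proof
    fix f assume f: "f \<in> pcset n J wt (pv [n])"
    have "f j = 0" for j
    proof (cases "j \<in> J")
      case False then show ?thesis using f unfolding pcset_def by auto
    next
      case True
      show ?thesis
      proof (rule ccontr)
        assume "f j \<noteq> 0"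
        then have "(\<Sum>j'\<in>{j'\<in>J. f j' = f j}. wt j') = 0"
          using f unfolding pcset_def pv_single by auto
        with block_pos[OF assms(1) True, of f "f j" wt] assms(2) show False by simp
      qed
    qed
    then show "f \<in> {\<lambda>j. 0}" by (auto simp: fun_eq_iff)
  qed
  show "{\<lambda>j. 0} \<subseteq> pcset n J wt (pv [n])"
    using assms unfolding pcset_def pv_single by auto
qed

lemma pc_row:
  assumes "finite J" "\<forall>j\<in>J. 0 < wt j" "sum wt J = n" "1 \<le> n"
  shows "pc n J wt (pv [n]) = 1"
  unfolding pc_def pcset_row[OF assms] by simp

lemma sum_pos_eq1:
  assumes "finite B" "\<forall>j\<in>B. 0 < (wt j :: nat)" "sum wt B = 1"
  shows "\<exists>j0. B = {j0} \<and> wt j0 = 1"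
proof -
  have "B \<noteq> {}" using assms(3) by auto
  then obtain j0 where j0: "j0 \<in> B" by auto
  have "sum wt B = wt j0 + sum wt (B - {j0})" using sum.remove[OF assms(1) j0] .
  then have a: "wt j0 = 1" "sum wt (B - {j0}) = 0" using assms(2,3) j0 by fastforce+
  have "B - {j0} = {}"
  proof (rule ccontr)
    assume "B - {j0} \<noteq> {}"
    then obtain j1 where "j1 \<in> B - {j0}" by auto
    then show False using a(2) assms(1,2) by (metis Diff_iff finite_Diff less_irrefl sum_eq_0_iff)
  qed
  then have "B = {j0}" using j0 by auto
  then show ?thesis using a by blast
qed

definition ind1 :: "nat \<Rightarrow> nat \<Rightarrow> nat" where
  "ind1 j0 = (\<lambda>j. if j = j0 then 1 else 0)"

lemma pcset_hook:
  assumes "finite J" "\<forall>j\<in>J. 0 < wt j" "sum wt J = n" "2 \<le> n"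
  shows "pcset n J wt (pv [n - 1, 1]) = ind1 ` {j\<in>J. wt j = 1}"
proof
  show "pcset n J wt (pv [n - 1, 1]) \<subseteq> ind1 ` {j\<in>J. wt j = 1}"
  proof
    fix f assume f: "f \<in> pcset n J wt (pv [n - 1, 1])"
    have fc: "(\<Sum>j'\<in>{j'\<in>J. f j' = i}. wt j') = pv [n - 1, 1] i" for i
      using f unfolding pcset_def by auto
    have big: "f j \<le> 1" if "j \<in> J" for j
    proof (rule ccontr)
      assume "\<not> f j \<le> 1"
      then have "(\<Sum>j'\<in>{j'\<in>J. f j' = f j}. wt j') = 0" using fc[of "f j"] unfolding pv_two by simp
      with block_pos[OF assms(1) that, of f "f j" wt] assms(2) show False by simp
    qed
    have "sum wt {j'\<in>J. f j' = 1} = 1" using fc[of 1] unfolding pv_two by simp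
    then obtain j0 where j0: "{j'\<in>J. f j' = 1} = {j0}" "wt j0 = 1"
      using sum_pos_eq1[of "{j'\<in>J. f j' = 1}" wt] assms(1,2) by auto
    have j0J: "j0 \<in> J" using j0(1) by auto
    have "f = ind1 j0"
    proof
      fix j show "f j = ind1 j0 j"
      proof (cases "j \<in> J")
        case False
        then have "j \<noteq> j0" using j0J by auto
        then show ?thesis using False f unfolding pcset_def ind1_def by auto
      next
        case True
        then show ?thesis using big[OF True] j0(1) unfolding ind1_def by (cases "f j = 1") auto
      qed
    qed
    then show "f \<in> ind1 ` {j\<in>J. wt j = 1}" using j0J j0(2) by auto
  qed
  show "ind1 ` {j\<in>J. wt j = 1} \<subseteq> pcset n J wt (pv [n - 1, 1])"
  proof
    fix f assume "f \<in> ind1 ` {j\<in>J. wt j = 1}"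
    then obtain j0 where j0: "j0 \<in> J" "wt j0 = 1" "f = ind1 j0" by auto
    have s0: "sum wt (J - {j0}) = n - 1" using sum.remove[OF assms(1) j0(1), of wt] assms(3) j0(2) by simp
    have "(\<Sum>j'\<in>{j'\<in>J. f j' = i}. wt j') = pv [n - 1, 1] i" for i
    proof -
      consider "i = 0" | "i = 1" | "1 < i" by linarith
      then show ?thesis
      proof cases
        case 1
        have "{j'\<in>J. f j' = i} = J - {j0}" using 1 j0 unfolding ind1_def by auto
        then show ?thesis using s0 1 unfolding pv_two by simp
      next
        case 2
        have "{j'\<in>J. f j' = i} = {j0}" using 2 j0 unfolding ind1_def by auto
        then show ?thesis using j0 2 unfolding pv_two by simp
      next
        case 3
        have e: "{j'\<in>J. f j' = i} = {}" using 3 j0 unfolding ind1_def by auto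
        show ?thesis using 3 unfolding pv_two by (subst e) simp
      qed
    qed
    then show "f \<in> pcset n J wt (pv [n - 1, 1])"
      using j0 assms(4) unfolding pcset_def ind1_def by auto
  qed
qed

lemma pc_hook:
  assumes "finite J" "\<forall>j\<in>J. 0 < wt j" "sum wt J = n" "2 \<le> n"
  shows "pc n J wt (pv [n - 1, 1]) = card {j\<in>J. wt j = 1}"
proof -
  have "inj_on ind1 {j\<in>J. wt j = 1}"
    unfolding ind1_def inj_on_def by (metis zero_neq_one)
  then show ?thesis unfolding pc_def pcset_hook[OF assms] by (simp add: card_image)
qed

definition cnt1 :: "nat list \<Rightarrow> nat" where
  "cnt1 \<mu> = card {j\<in>{..<length \<mu>}. \<mu> ! j = 1}"

lemma part_pc_hyps:
  assumes "\<mu> \<in> partitions n"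
  shows "finite {..<length \<mu>}" "\<forall>j\<in>{..<length \<mu>}. 0 < \<mu> ! j" "sum (nth \<mu>) {..<length \<mu>} = n"
  using assms unfolding partitions_def is_partition_def
  by (auto simp: sum_list_sum_nth atLeast0LessThan)

lemma coeff_hook_psi:
  assumes "T \<subseteq> partitions n" "2 \<le> n"
  shows "schur_coeff n (psi n T) [n - 1, 1] = (\<Sum>\<mu>\<in>T. int (cnt1 \<mu>) - 1)"
proof -
  obtain c where c: "expands n (psi n T) c" using expand_exists[OF symf_psi[OF assms(1)]] by blast
  have "schur_coeff n (psi n T) [n - 1, 1] = c [n - 1, 1]" using schur_coeff_eq[OF c] .
  also have "\<dots> = psi n T (pv [n - 1, 1]) - psi n T (pv [n])" using coeff_hook_functional[OF c assms(2)] .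
  also have "\<dots> = (\<Sum>\<mu>\<in>T. pcoeff n \<mu> (pv [n - 1, 1]) - pcoeff n \<mu> (pv [n]))"
    unfolding psi_def by (simp add: sum_subtractf)
  also have "\<dots> = (\<Sum>\<mu>\<in>T. int (cnt1 \<mu>) - 1)"
  proof (rule sum.cong[OF refl])
    fix \<mu> assume "\<mu> \<in> T"
    then have m: "\<mu> \<in> partitions n" using assms(1) by auto
    show "pcoeff n \<mu> (pv [n - 1, 1]) - pcoeff n \<mu> (pv [n]) = int (cnt1 \<mu>) - 1"
      unfolding pcoeff_pc cnt1_def
      using pc_hook[OF part_pc_hyps[OF m] assms(2)] pc_row[OF part_pc_hyps[OF m]] assms(2) by simp
  qed
  finally show ?thesis .
qed


function gen :: "nat \<Rightarrow> nat \<Rightarrow> nat list list" where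
  "gen n m = (if n = 0 then [[]] else concat (map (\<lambda>k. map (Cons k) (gen (n - k) k)) [1..<Suc (min n m)]))"
  by pat_completeness auto
termination by (relation "measure fst") auto

declare gen.simps[simp del]

lemma gen_complete:
  "is_partition n xs \<Longrightarrow> (\<forall>x\<in>set xs. x \<le> m) \<Longrightarrow> xs \<in> set (gen n m)"
proof (induction n m arbitrary: xs rule: gen.induct)
  case (1 n m)
  show ?case
  proof (cases "n = 0")
    case True
    then have "xs = []" using 1(2) unfolding is_partition_def by (cases xs) auto
    moreover have "gen n m = [[]]" by (simp only: gen.simps[of n m] if_P[OF True])
    ultimately show ?thesis by simp
  next
    case False
    then obtain k r where xs: "xs = k # r" using 1(2) unfolding is_partition_def by (cases xs) auto
    have kpos: "0 < k" and kn: "k \<le> n" and km: "k \<le> m" using 1(2,3) xs unfolding is_partition_def by auto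
    have sr: "sorted (rev r)" "\<forall>x\<in>set r. x \<le> k"
      using 1(2) xs unfolding is_partition_def by (auto simp: sorted_append)
    have part: "is_partition (n - k) r" using 1(2) xs sr unfolding is_partition_def by auto
    have kin: "k \<in> set [1..<Suc (min n m)]" using kpos kn km by auto
    have "r \<in> set (gen (n - k) k)" by (rule 1(1)[OF False kin part sr(2)])
    then have a: "k # r \<in> set (map (Cons k) (gen (n - k) k))" by simp
    have b: "map (Cons k) (gen (n - k) k) \<in> set (map (\<lambda>k. map (Cons k) (gen (n - k) k)) [1..<Suc (min n m)])"
      unfolding set_map by (rule imageI[OF kin])
    have "k # r \<in> set (concat (map (\<lambda>k. map (Cons k) (gen (n - k) k)) [1..<Suc (min n m)]))"
      unfolding set_concat using b a by (rule UN_I)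
    moreover have g: "gen n m = concat (map (\<lambda>k. map (Cons k) (gen (n - k) k)) [1..<Suc (min n m)])"
      by (simp only: gen.simps[of n m] if_not_P[OF False])
    ultimately show ?thesis unfolding xs by (simp only:)
  qed
qed

lemma gen_num: "gen (numeral v) m = concat (map (\<lambda>k. map (Cons k) (gen (numeral v - k) k)) [1..<Suc (min (numeral v) m)])"
  by (simp only: gen.simps[of "numeral v" m] if_not_P[OF zero_neq_numeral[symmetric]])

lemma gen_one: "gen 1 m = concat (map (\<lambda>k. map (Cons k) (gen (1 - k) k)) [1..<Suc (min 1 m)])"
  by (simp only: gen.simps[of 1 m] if_not_P[OF one_neq_zero])

lemma gen_Suc: "gen (Suc n) m = concat (map (\<lambda>k. map (Cons k) (gen (Suc n - k) k)) [1..<Suc (min (Suc n) m)])"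
  by (simp only: gen.simps[of "Suc n" m] if_not_P[OF Suc_not_Zero])

lemma gen_zero: "gen 0 m = [[]]"
  by (simp only: gen.simps[of 0 m] if_P[OF refl])


lemma no1_bound:
  assumes "2 \<le> n" "n \<le> 9"
  shows "card {\<mu>\<in>partitions n. 1 \<notin> set \<mu>} \<le> n - 1"
proof -
  have sub: "{\<mu>\<in>partitions n. 1 \<notin> set \<mu>} \<subseteq> set (filter (\<lambda>xs. 1 \<notin> set xs) (gen n n))"
  proof
    fix \<mu> assume "\<mu> \<in> {\<mu>\<in>partitions n. 1 \<notin> set \<mu>}"
    then have h: "is_partition n \<mu>" "1 \<notin> set \<mu>" unfolding partitions_def by auto
    have "\<forall>x\<in>set \<mu>. x \<le> n"
    proof
      fix x assume "x \<in> set \<mu>"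
      then have "x \<le> sum_list \<mu>" by (rule member_le_sum_list) auto
      then show "x \<le> n" using h(1) unfolding is_partition_def by simp
    qed
    then show "\<mu> \<in> set (filter (\<lambda>xs. 1 \<notin> set xs) (gen n n))" using gen_complete[OF h(1)] h(2) by auto
  qed
  have "card {\<mu>\<in>partitions n. 1 \<notin> set \<mu>} \<le> card (set (filter (\<lambda>xs. 1 \<notin> set xs) (gen n n)))"
    by (rule card_mono[OF _ sub]) simp
  also have "\<dots> \<le> length (filter (\<lambda>xs. 1 \<notin> set xs) (gen n n))" by (rule card_length)
  also have "\<dots> \<le> n - 1"
  proof -
    consider "n = 2" | "n = 3" | "n = 4" | "n = 5" | "n = 6" | "n = 7" | "n = 8" | "n = 9"
      using assms by linarith
    then show ?thesis by cases (simp_all add: gen_num gen_one gen_zero gen_Suc upt_rec)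
  qed
  finally show ?thesis .
qed


lemma cnt1_rep: "cnt1 (replicate n 1) = n"
proof -
  have "{j \<in> {..<length (replicate n (1::nat))}. replicate n (1::nat) ! j = 1} = {..<n}" by auto
  then show ?thesis unfolding cnt1_def by simp
qed

lemma cnt1_no1:
  assumes "1 \<notin> set \<mu>" shows "cnt1 \<mu> = 0"
proof -
  have "{j \<in> {..<length \<mu>}. \<mu> ! j = 1} = {}" using assms nth_mem by force
  then show ?thesis unfolding cnt1_def by simp
qed

lemma cnt1_pos: "1 \<in> set \<mu> \<Longrightarrow> 1 \<le> cnt1 \<mu>"
proof -
  assume "1 \<in> set \<mu>"
  then obtain j where "j < length \<mu>" "\<mu> ! j = 1" by (auto simp: in_set_conv_nth)
  then have "{j \<in> {..<length \<mu>}. \<mu> ! j = 1} \<noteq> {}" by auto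
  then show ?thesis unfolding cnt1_def by (simp add: Suc_leI card_gt_0_iff)
qed

lemma rep_part: "replicate n 1 \<in> partitions n"
  unfolding partitions_def is_partition_def by (simp add: sum_list_replicate)

lemma sum_if_neg:
  assumes "finite A"
  shows "(\<Sum>\<mu>\<in>A. if Pr \<mu> then (-1::int) else 0) = - int (card {\<mu>\<in>A. Pr \<mu>})"
proof -
  have "(\<Sum>\<mu>\<in>A. if Pr \<mu> then (-1::int) else 0) = (\<Sum>\<mu>\<in>A \<inter> {\<mu>. Pr \<mu>}. -1)"
    using assms by (simp add: sum.If_cases)
  also have "A \<inter> {\<mu>. Pr \<mu>} = {\<mu>\<in>A. Pr \<mu>}" by auto
  finally show ?thesis by simp
qed

lemma part1_neg:
  assumes "T \<subseteq> partitions n" "replicate n 1 \<in> T" "2 \<le> n" "n \<le> 9"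
  shows "0 \<le> (\<Sum>\<mu>\<in>T. int (cnt1 \<mu>) - 1)"
proof -
  let ?r = "replicate n (1::nat)"
  have fT: "finite T" using finite_subset[OF assms(1) finite_partitions] .
  have e1: "(\<Sum>\<mu>\<in>T. int (cnt1 \<mu>) - 1) = (int n - 1) + (\<Sum>\<mu>\<in>T - {?r}. int (cnt1 \<mu>) - 1)"
    using sum.remove[OF fT assms(2), of "\<lambda>\<mu>. int (cnt1 \<mu>) - 1"] cnt1_rep[of n] by simp
  have e2: "(\<Sum>\<mu>\<in>T - {?r}. if 1 \<notin> set \<mu> then -1 else 0) \<le> (\<Sum>\<mu>\<in>T - {?r}. int (cnt1 \<mu>) - 1)"
  proof (rule sum_mono)
    fix \<mu> show "(if 1 \<notin> set \<mu> then -1 else 0) \<le> int (cnt1 \<mu>) - 1"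
    proof (cases "1 \<in> set \<mu>")
      case True then show ?thesis using cnt1_pos[OF True] by simp
    next
      case False then show ?thesis using cnt1_no1[OF False] by simp
    qed
  qed
  have e3: "(\<Sum>\<mu>\<in>T - {?r}. if 1 \<notin> set \<mu> then (-1::int) else 0) = - int (card {\<mu>\<in>T - {?r}. 1 \<notin> set \<mu>})"
    using fT by (intro sum_if_neg) simp
  have e4: "card {\<mu>\<in>T - {?r}. 1 \<notin> set \<mu>} \<le> card {\<mu>\<in>partitions n. 1 \<notin> set \<mu>}"
    by (rule card_mono) (use finite_partitions assms(1) in auto)
  have e5: "card {\<mu>\<in>partitions n. 1 \<notin> set \<mu>} \<le> n - 1" using no1_bound assms(3,4) by simp
  show ?thesis using e1 e2 e3 e4 e5 assms(3) by linarith
qed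

definition U1 :: "nat \<Rightarrow> nat list set" where
  "U1 n = {[n], [n - 6, 2, 2, 2]} \<union> (\<lambda>a. [n - a, a]) ` {2..n div 2} \<union>
     (\<lambda>a. [n - a - 2, a, 2]) ` {2..(n - 2) div 2} \<union> (\<lambda>a. [n - a - 3, a, 3]) ` {3..(n - 3) div 2}"

lemma U1_props:
  assumes "10 \<le> n" "\<mu> \<in> U1 n"
  shows "\<mu> \<in> partitions n" "1 \<notin> set \<mu>"
  using assms unfolding U1_def partitions_def is_partition_def by auto

lemma U1_card:
  assumes "10 \<le> n"
  shows "n \<le> card (U1 n)"
proof -
  let ?A = "{[n], [n - 6, 2, 2, 2]}"
  let ?B = "(\<lambda>a. [n - a, a]) ` {2..n div 2}"
  let ?C = "(\<lambda>a. [n - a - 2, a, 2]) ` {2..(n - 2) div 2}"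
  let ?D = "(\<lambda>a. [n - a - 3, a, 3]) ` {3..(n - 3) div 2}"
  have cA: "card ?A = 2" by simp
  have cB: "card ?B = n div 2 - 1" by (subst card_image) (auto simp: inj_on_def)
  have cC: "card ?C = (n - 2) div 2 - 1" by (subst card_image) (auto simp: inj_on_def)
  have cD: "card ?D = (n - 3) div 2 - 2" by (subst card_image) (auto simp: inj_on_def)
  have d1: "?A \<inter> ?B = {}" using assms by auto
  have d2: "(?A \<union> ?B) \<inter> ?C = {}" using assms by auto
  have d3: "(?A \<union> ?B \<union> ?C) \<inter> ?D = {}" using assms by auto
  have "card (U1 n) = card ?A + card ?B + card ?C + card ?D"
    unfolding U1_def
    using card_Un_disjoint[OF _ _ d1] card_Un_disjoint[OF _ _ d2] card_Un_disjoint[OF _ _ d3] by simp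
  moreover have "n \<le> 2 + (n div 2 - 1) + ((n - 2) div 2 - 1) + ((n - 3) div 2 - 2)"
    using assms by presburger
  ultimately show ?thesis using cA cB cC cD by simp
qed

theorem part1:
  assumes "2 \<le> n"
  shows "(\<exists>T. T \<subseteq> partitions n \<and> replicate n 1 \<in> T \<and> schur_coeff n (psi n T) [n - 1, 1] < 0) \<longleftrightarrow> 10 \<le> n"
proof
  assume "\<exists>T. T \<subseteq> partitions n \<and> replicate n 1 \<in> T \<and> schur_coeff n (psi n T) [n - 1, 1] < 0"
  then obtain T where T: "T \<subseteq> partitions n" "replicate n 1 \<in> T" "schur_coeff n (psi n T) [n - 1, 1] < 0" by blast
  show "10 \<le> n"
  proof (rule ccontr)
    assume "\<not> 10 \<le> n"
    then have "0 \<le> (\<Sum>\<mu>\<in>T. int (cnt1 \<mu>) - 1)" using part1_neg[OF T(1,2) assms] by simp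
    then show False using T(3) coeff_hook_psi[OF T(1) assms] by simp
  qed
next
  assume n: "10 \<le> n"
  let ?r = "replicate n (1::nat)"
  let ?T = "insert ?r (U1 n)"
  have rU: "?r \<notin> U1 n" using U1_props(2)[OF n] n by fastforce
  have fU: "finite (U1 n)" unfolding U1_def by simp
  have sub: "?T \<subseteq> partitions n" using U1_props(1)[OF n] rep_part by auto
  have "(\<Sum>\<mu>\<in>?T. int (cnt1 \<mu>) - 1) = (int (cnt1 ?r) - 1) + (\<Sum>\<mu>\<in>U1 n. int (cnt1 \<mu>) - 1)"
    using sum.insert[OF fU rU] by simp
  also have "(\<Sum>\<mu>\<in>U1 n. int (cnt1 \<mu>) - 1) = (\<Sum>\<mu>\<in>U1 n. -1)"
    using U1_props(2)[OF n] cnt1_no1 by (intro sum.cong) auto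
  finally have "(\<Sum>\<mu>\<in>?T. int (cnt1 \<mu>) - 1) = int n - 1 - int (card (U1 n))" using cnt1_rep by simp
  then have "schur_coeff n (psi n ?T) [n - 1, 1] < 0"
    using coeff_hook_psi[OF sub assms] U1_card[OF n] by simp
  then show "\<exists>T. T \<subseteq> partitions n \<and> replicate n 1 \<in> T \<and> schur_coeff n (psi n T) [n - 1, 1] < 0"
    using sub by blast
qed


definition cmp :: "nat \<Rightarrow> nat list set" where
  "cmp m = {xs. (\<forall>x\<in>set xs. 0 < x) \<and> sum_list xs = m}"

lemma cmp_len: "xs \<in> cmp m \<Longrightarrow> length xs \<le> m"
  unfolding cmp_def using len_le_sum_list by blast

lemma finite_cmp: "finite (cmp m)"
proof -
  have "cmp m \<subseteq> {xs. set xs \<subseteq> {..m} \<and> length xs \<le> m}"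
  proof
    fix xs assume h: "xs \<in> cmp m"
    have "set xs \<subseteq> {..m}"
    proof
      fix x assume "x \<in> set xs"
      then have "x \<le> sum_list xs" by (rule member_le_sum_list) auto
      then show "x \<in> {..m}" using h unfolding cmp_def by simp
    qed
    then show "xs \<in> {xs. set xs \<subseteq> {..m} \<and> length xs \<le> m}" using cmp_len[OF h] by simp
  qed
  moreover have "finite {xs. set xs \<subseteq> {..m} \<and> length xs \<le> m}"
    using finite_lists_length_le[of "{..m}" m] by simp
  ultimately show ?thesis by (rule finite_subset)
qed

lemma cmp_0: "cmp 0 = {[]}"
  unfolding cmp_def by (auto, case_tac x, auto)

lemma cmp_snoc_bij:
  assumes "0 < m"
  shows "bij_betw (\<lambda>(a, xs). xs @ [a]) (Sigma {1..m} (\<lambda>a. cmp (m - a))) (cmp m)"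
proof (rule bij_betwI')
  fix x y assume "x \<in> Sigma {1..m} (\<lambda>a. cmp (m - a))" "y \<in> Sigma {1..m} (\<lambda>a. cmp (m - a))"
  show "((\<lambda>(a, xs). xs @ [a]) x = (\<lambda>(a, xs). xs @ [a]) y) = (x = y)"
    by (cases x; cases y) auto
next
  fix x assume "x \<in> Sigma {1..m} (\<lambda>a. cmp (m - a))"
  then show "(\<lambda>(a, xs). xs @ [a]) x \<in> cmp m" unfolding cmp_def by auto
next
  fix ys assume ys: "ys \<in> cmp m"
  then have "ys \<noteq> []" using assms unfolding cmp_def by auto
  then have e: "ys = butlast ys @ [last ys]" by simp
  have "0 < last ys" using ys \<open>ys \<noteq> []\<close> unfolding cmp_def by auto
  moreover have "sum_list ys = sum_list (butlast ys) + last ys" using e by (metis sum_list_append sum_list_simps add.right_neutral)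
  moreover have "\<forall>x\<in>set (butlast ys). 0 < x" using ys unfolding cmp_def by (auto dest: in_set_butlastD)
  ultimately have "(last ys, butlast ys) \<in> Sigma {1..m} (\<lambda>a. cmp (m - a))"
    using ys unfolding cmp_def by auto
  then show "\<exists>x\<in>Sigma {1..m} (\<lambda>a. cmp (m - a)). ys = (\<lambda>(a, xs). xs @ [a]) x"
    using e by force
qed

lemma sum_cmp:
  assumes "0 < m"
  shows "(\<Sum>xs\<in>cmp m. F xs) = (\<Sum>a\<in>{1..m}. \<Sum>xs\<in>cmp (m - a). F (xs @ [a]))"
proof -
  have "(\<Sum>xs\<in>cmp m. F xs) = (\<Sum>p\<in>Sigma {1..m} (\<lambda>a. cmp (m - a)). F ((\<lambda>(a, xs). xs @ [a]) p))"
    using sum.reindex_bij_betw[OF cmp_snoc_bij[OF assms], of F] by simp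
  also have "\<dots> = (\<Sum>a\<in>{1..m}. \<Sum>xs\<in>cmp (m - a). F (xs @ [a]))"
    by (subst sum.Sigma) (auto simp: finite_cmp split_beta)
  finally show ?thesis .
qed

lemma sum_pow_neg:
  assumes "finite J" "J \<noteq> {}"
  shows "(\<Sum>B\<in>Pow J. (-1::int) ^ card B) = 0"
proof -
  obtain x where x: "x \<in> J" using assms(2) by auto
  let ?K = "J - {x}"
  have fK: "finite ?K" using assms(1) by simp
  have PJ: "Pow J = Pow ?K \<union> insert x ` Pow ?K" using Pow_insert[of x ?K] x by (simp add: insert_absorb)
  have disj: "Pow ?K \<inter> insert x ` Pow ?K = {}" by auto
  have inj: "inj_on (insert x) (Pow ?K)" unfolding inj_on_def by auto
  have "(\<Sum>B\<in>Pow J. (-1::int) ^ card B) = (\<Sum>B\<in>Pow ?K. (-1::int) ^ card B) + (\<Sum>B\<in>insert x ` Pow ?K. (-1::int) ^ card B)"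
    unfolding PJ by (rule sum.union_disjoint) (use fK disj in auto)
  also have "(\<Sum>B\<in>insert x ` Pow ?K. (-1::int) ^ card B) = (\<Sum>B\<in>Pow ?K. (-1::int) ^ card (insert x B))"
    by (rule sum.reindex[OF inj, unfolded Fun.comp_def])
  also have "\<dots> = (\<Sum>B\<in>Pow ?K. - ((-1::int) ^ card B))"
  proof (rule sum.cong[OF refl])
    fix B assume "B \<in> Pow ?K"
    then have "finite B" "x \<notin> B" using fK finite_subset by auto
    then show "(-1::int) ^ card (insert x B) = - ((-1) ^ card B)" by simp
  qed
  finally show ?thesis by (simp add: sum_negf)
qed

lemma finite_funs:
  assumes "finite J" "finite V"
  shows "finite {f :: nat \<Rightarrow> 'a. (\<forall>j\<in>J. f j \<in> V) \<and> (\<forall>j. j \<notin> J \<longrightarrow> f j = d)}"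
  using assms(1)
proof (induction J rule: finite_induct)
  case empty
  have "{f :: nat \<Rightarrow> 'a. (\<forall>j\<in>{}. f j \<in> V) \<and> (\<forall>j. j \<notin> {} \<longrightarrow> f j = d)} = {\<lambda>j. d}" by auto
  then show ?case by simp
next
  case (insert x J)
  let ?S = "{f :: nat \<Rightarrow> 'a. (\<forall>j\<in>J. f j \<in> V) \<and> (\<forall>j. j \<notin> J \<longrightarrow> f j = d)}"
  have "{f :: nat \<Rightarrow> 'a. (\<forall>j\<in>insert x J. f j \<in> V) \<and> (\<forall>j. j \<notin> insert x J \<longrightarrow> f j = d)}
      \<subseteq> (\<lambda>(f, v). f(x := v)) ` (?S \<times> V)"
  proof
    fix f assume f: "f \<in> {f :: nat \<Rightarrow> 'a. (\<forall>j\<in>insert x J. f j \<in> V) \<and> (\<forall>j. j \<notin> insert x J \<longrightarrow> f j = d)}"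
    have "(f(x := d), f x) \<in> ?S \<times> V" using f insert.hyps(2) by auto
    moreover have "f = (\<lambda>(f, v). f(x := v)) (f(x := d), f x)" by auto
    ultimately show "f \<in> (\<lambda>(f, v). f(x := v)) ` (?S \<times> V)" by blast
  qed
  moreover have "finite ((\<lambda>(f, v). f(x := v)) ` (?S \<times> V))" using insert.IH assms(2) by simp
  ultimately show ?case by (rule finite_subset)
qed


lemma pv_snoc: "pv (xs @ [a]) k = (if k < length xs then pv xs k else if k = length xs then a else 0)"
  unfolding pv_def by (auto simp: nth_append)

lemma chain_const:
  assumes G: "G \<in> chainset N lam \<alpha>" and sh: "shape N lam" and z: "\<alpha> k = 0"
  shows "G (Suc k) = G k"
proof -
  have s: "sz N (G (Suc k)) = sz N (G k)" using chain_sz_step[OF G, of k] z by simp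
  have le: "G k i \<le> G (Suc k) i" for i by (rule chain_mono1[OF G])
  have out: "N \<le> i \<Longrightarrow> G j i = 0" for i j using chain_le[OF G, of j i] sh unfolding shape_def by simp
  show ?thesis
  proof
    fix i show "G (Suc k) i = G k i"
    proof (cases "i < N")
      case True
      then show ?thesis using sum_le_eq_each[of "{..<N}" "G k" "G (Suc k)" i] le s unfolding sz_def by simp
    next
      case False then show ?thesis using out by simp
    qed
  qed
qed

lemma chain_tail:
  assumes G: "G \<in> chainset N lam \<alpha>" and sh: "shape N lam" and z: "\<forall>k\<ge>L. \<alpha> k = 0" and L: "L \<le> k"
  shows "G k = lam"
proof -
  have "G (L + d) = G L" for d
  proof (induction d)
    case 0 then show ?case by simp
  next
    case (Suc d) then show ?case using chain_const[OF G sh, of "L + d"] z by simp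
  qed
  then have "G k = G L" "G (max N L) = G L" using L by (metis le_add_diff_inverse max.cobounded2)+
  moreover have "G (max N L) = lam" using chain_N[OF G] by simp
  ultimately show ?thesis by simp
qed

definition HSset :: "nat \<Rightarrow> (nat \<Rightarrow> nat) \<Rightarrow> nat \<Rightarrow> (nat \<Rightarrow> nat) set" where
  "HSset N lam a = {\<rho>. hs \<rho> lam \<and> sz N \<rho> + a = sz N lam}"

lemma hs_shape: "hs \<rho> lam \<Longrightarrow> shape N lam \<Longrightarrow> shape N \<rho>"
  unfolding hs_def shape_def by (metis le_trans le_zero_eq)

lemma shape_hs_refl: "shape N lam \<Longrightarrow> hs lam lam"
  unfolding hs_def shape_def by auto

definition phiG :: "nat \<Rightarrow> (nat \<Rightarrow> nat \<Rightarrow> nat) \<Rightarrow> (nat \<Rightarrow> nat) \<times> (nat \<Rightarrow> nat \<Rightarrow> nat)" where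
  "phiG L G = (G L, \<lambda>k. if k \<le> L then G k else G L)"

definition psiG :: "nat \<Rightarrow> (nat \<Rightarrow> nat) \<Rightarrow> (nat \<Rightarrow> nat) \<times> (nat \<Rightarrow> nat \<Rightarrow> nat) \<Rightarrow> nat \<Rightarrow> nat \<Rightarrow> nat" where
  "psiG L lam p = (\<lambda>k. if k \<le> L then snd p k else lam)"

lemma chain_snoc_bij:
  assumes sh: "shape N lam" and L: "length xs < N"
  shows "bij_betw (phiG (length xs)) (chainset N lam (pv (xs @ [a])))
           (Sigma (HSset N lam a) (\<lambda>\<rho>. chainset N \<rho> (pv xs)))"
proof (rule bij_betw_byWitness[where f' = "psiG (length xs) lam"])
  let ?L = "length xs"
  have zA: "\<forall>k\<ge>Suc ?L. pv (xs @ [a]) k = 0" by (simp add: pv_snoc)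
  have zB: "\<forall>k\<ge>?L. pv xs k = 0" by (simp add: pv_out)
  {
    fix G assume G: "G \<in> chainset N lam (pv (xs @ [a]))"
    have tail: "k > ?L \<Longrightarrow> G k = lam" for k using chain_tail[OF G sh zA, of k] by simp
    note tail = this
    have hsL: "hs (G ?L) lam" using chain_hs[OF G L] tail[of "Suc ?L"] by simp
    have szL: "sz N (G ?L) + a = sz N lam"
      using chain_sz_step[OF G, of ?L] tail[of "Suc ?L"] by (simp add: pv_snoc)
    have shL: "shape N (G ?L)" by (rule hs_shape[OF hsL sh])
    let ?H = "\<lambda>k. if k \<le> ?L then G k else G ?L"
    have H: "?H \<in> chainset N (G ?L) (pv xs)"
      unfolding chainset_def
    proof (intro CollectI conjI allI impI)
      show "?H 0 = (\<lambda>i. 0)" using chain_0[OF G] by simp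
    next
      fix k assume "N \<le> k" then show "?H k = G ?L" using L by simp
    next
      fix k assume k: "k < N"
      show "hs (?H k) (?H (Suc k))"
      proof (cases "k < ?L")
        case True then show ?thesis using chain_hs[OF G k] by simp
      next
        case False then show ?thesis using shape_hs_refl[OF shL] by simp
      qed
    next
      fix k
      show "pv xs k = sz N (?H (Suc k)) - sz N (?H k)"
      proof (cases "k < ?L")
        case True then show ?thesis using chain_content[OF G, of k] by (simp add: pv_snoc)
      next
        case False then show ?thesis by (simp add: pv_out)
      qed
    qed
    have "phiG ?L G \<in> Sigma (HSset N lam a) (\<lambda>\<rho>. chainset N \<rho> (pv xs))"
      unfolding phiG_def HSset_def using hsL szL H by simp
    moreover have "psiG ?L lam (phiG ?L G) = G"
      unfolding psiG_def phiG_def using tail by (auto simp: fun_eq_iff not_le)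
    ultimately have "phiG ?L G \<in> Sigma (HSset N lam a) (\<lambda>\<rho>. chainset N \<rho> (pv xs))"
      "psiG ?L lam (phiG ?L G) = G" by auto
  }
  note A = this
  {
    fix p assume p: "p \<in> Sigma (HSset N lam a) (\<lambda>\<rho>. chainset N \<rho> (pv xs))"
    obtain \<rho> H where pe: "p = (\<rho>, H)" by (cases p)
    have \<rho>: "hs \<rho> lam" "sz N \<rho> + a = sz N lam" and H: "H \<in> chainset N \<rho> (pv xs)"
      using p pe unfolding HSset_def by auto
    have sh\<rho>: "shape N \<rho>" by (rule hs_shape[OF \<rho>(1) sh])
    have Ht: "k \<ge> ?L \<Longrightarrow> H k = \<rho>" for k using chain_tail[OF H sh\<rho> zB] by simp
    let ?G = "psiG ?L lam p"
    have G: "?G \<in> chainset N lam (pv (xs @ [a]))"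
      unfolding chainset_def psiG_def pe snd_conv
    proof (intro CollectI conjI allI impI)
      show "(\<lambda>k. if k \<le> ?L then H k else lam) 0 = (\<lambda>i. 0)" using chain_0[OF H] by simp
    next
      fix k assume "N \<le> k" then show "(\<lambda>k. if k \<le> ?L then H k else lam) k = lam" using L by simp
    next
      fix k assume k: "k < N"
      show "hs ((\<lambda>k. if k \<le> ?L then H k else lam) k) ((\<lambda>k. if k \<le> ?L then H k else lam) (Suc k))"
      proof (cases "k < ?L")
        case True then show ?thesis using chain_hs[OF H k] by simp
      next
        case False
        show ?thesis
        proof (cases "k = ?L")
          case True then show ?thesis using Ht[of k] \<rho>(1) by simp
        next
          case False then show ?thesis using \<open>\<not> k < ?L\<close> shape_hs_refl[OF sh] by simp
        qed
      qed
    next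
      fix k
      show "pv (xs @ [a]) k = sz N ((\<lambda>k. if k \<le> ?L then H k else lam) (Suc k)) - sz N ((\<lambda>k. if k \<le> ?L then H k else lam) k)"
      proof (cases "k < ?L")
        case True then show ?thesis using chain_content[OF H, of k] by (simp add: pv_snoc)
      next
        case False
        show ?thesis
        proof (cases "k = ?L")
          case True then show ?thesis using Ht[of k] \<rho>(2) by (simp add: pv_snoc)
        next
          case False then show ?thesis using \<open>\<not> k < ?L\<close> by (simp add: pv_snoc)
        qed
      qed
    qed
    have "phiG ?L ?G = p"
      unfolding phiG_def psiG_def pe using Ht by (auto simp: fun_eq_iff not_le)
    note G this
  }
  note B = this
  show "\<forall>a\<in>chainset N lam (pv (xs @ [a])). psiG (length xs) lam (phiG (length xs) a) = a" using A by blast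
  show "\<forall>a'\<in>Sigma (HSset N lam a) (\<lambda>\<rho>. chainset N \<rho> (pv xs)). phiG (length xs) (psiG (length xs) lam a') = a'"
    using B by blast
  show "phiG (length xs) ` chainset N lam (pv (xs @ [a])) \<subseteq> Sigma (HSset N lam a) (\<lambda>\<rho>. chainset N \<rho> (pv xs))"
    using A by blast
  show "psiG (length xs) lam ` Sigma (HSset N lam a) (\<lambda>\<rho>. chainset N \<rho> (pv xs)) \<subseteq> chainset N lam (pv (xs @ [a]))"
    using B by blast
qed


definition vecs :: "nat \<Rightarrow> nat \<Rightarrow> (nat \<Rightarrow> nat) set" where
  "vecs N B = {f. (\<forall>j\<in>{..<N}. f j \<in> {..B}) \<and> (\<forall>j. j \<notin> {..<N} \<longrightarrow> f j = 0)}"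

lemma finite_vecs: "finite (vecs N B)"
  unfolding vecs_def by (rule finite_funs) auto

lemma le_sz: "i < N \<Longrightarrow> lam i \<le> sz N lam"
  unfolding sz_def by (rule member_le_sum) auto

lemma finite_HSset:
  assumes sh: "shape N lam"
  shows "finite (HSset N lam a)"
proof (rule finite_subset[OF _ finite_vecs[of N "sz N lam"]])
  show "HSset N lam a \<subseteq> vecs N (sz N lam)"
  proof
    fix \<rho> assume "\<rho> \<in> HSset N lam a"
    then have h: "\<forall>i. \<rho> i \<le> lam i" unfolding HSset_def hs_def by auto
    show "\<rho> \<in> vecs N (sz N lam)"
      unfolding vecs_def using h le_sz[of _ N lam] sh unfolding shape_def
      by (auto intro: le_trans) (metis le_zero_eq not_le)
  qed
qed

lemma finite_chainset:
  assumes sh: "shape N lam"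
  shows "finite (chainset N lam \<alpha>)"
proof -
  have "chainset N lam \<alpha> \<subseteq> {G. (\<forall>k\<in>{..<N}. G k \<in> vecs N (sz N lam)) \<and> (\<forall>k. k \<notin> {..<N} \<longrightarrow> G k = lam)}"
  proof
    fix G assume G: "G \<in> chainset N lam \<alpha>"
    have "G k \<in> vecs N (sz N lam)" for k
      unfolding vecs_def using chain_le[OF G, of k] le_sz[of _ N lam] sh unfolding shape_def
      by (auto intro: le_trans) (metis le_zero_eq not_le)
    then show "G \<in> {G. (\<forall>k\<in>{..<N}. G k \<in> vecs N (sz N lam)) \<and> (\<forall>k. k \<notin> {..<N} \<longrightarrow> G k = lam)}"
      using chain_N[OF G] by auto
  qed
  moreover have "finite {G. (\<forall>k\<in>{..<N}. G k \<in> vecs N (sz N lam)) \<and> (\<forall>k. k \<notin> {..<N} \<longrightarrow> G k = lam)}"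
    by (rule finite_funs) (auto simp: finite_vecs)
  ultimately show ?thesis by (rule finite_subset)
qed

lemma Kv_snoc:
  assumes sh: "shape N lam" and L: "length xs < N"
  shows "Kv N lam (pv (xs @ [a])) = (\<Sum>\<rho>\<in>HSset N lam a. Kv N \<rho> (pv xs))"
proof -
  have "Kv N lam (pv (xs @ [a])) = card (Sigma (HSset N lam a) (\<lambda>\<rho>. chainset N \<rho> (pv xs)))"
    using Kv_chains[OF sh] bij_betw_same_card[OF chain_snoc_bij[OF sh L]] by simp
  also have "\<dots> = (\<Sum>\<rho>\<in>HSset N lam a. card (chainset N \<rho> (pv xs)))"
  proof (rule card_SigmaI)
    show "finite (HSset N lam a)" by (rule finite_HSset[OF sh])
    show "\<forall>\<rho>\<in>HSset N lam a. finite (chainset N \<rho> (pv xs))"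
      using finite_chainset hs_shape[OF _ sh] unfolding HSset_def by blast
  qed
  also have "\<dots> = (\<Sum>\<rho>\<in>HSset N lam a. Kv N \<rho> (pv xs))"
    using Kv_chains hs_shape[OF _ sh] unfolding HSset_def by (intro sum.cong) auto
  finally show ?thesis .
qed


definition colv :: "(nat \<Rightarrow> nat) \<Rightarrow> bool" where
  "colv \<rho> \<longleftrightarrow> (\<forall>i. \<rho> i \<le> 1)"

definition cvec :: "nat \<Rightarrow> nat \<Rightarrow> nat" where
  "cvec r = (\<lambda>i. if i < r then 1 else 0)"

lemma sz_cvec: "r \<le> N \<Longrightarrow> sz N (cvec r) = r"
proof -
  assume r: "r \<le> N"
  have "sz N (cvec r) = card ({..<N} \<inter> {i. i < r})" unfolding sz_def cvec_def by (simp add: sum.If_cases)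
  also have "{..<N} \<inter> {i. i < r} = {..<r}" using r by auto
  finally show ?thesis by simp
qed

lemma sz_strict:
  assumes "\<And>i. a i \<le> b i" "a j < b j" "j < N"
  shows "sz N a < sz N b"
  unfolding sz_def by (rule sum_strict_mono_ex1) (use assms in auto)

lemma finite_hs:
  assumes sh: "shape N lam"
  shows "finite {\<rho>. hs \<rho> lam}"
proof (rule finite_subset[OF _ finite_vecs[of N "sz N lam"]])
  show "{\<rho>. hs \<rho> lam} \<subseteq> vecs N (sz N lam)"
  proof
    fix \<rho> assume "\<rho> \<in> {\<rho>. hs \<rho> lam}"
    then have h: "\<forall>i. \<rho> i \<le> lam i" unfolding hs_def by auto
    show "\<rho> \<in> vecs N (sz N lam)"
      unfolding vecs_def
    proof (intro CollectI conjI ballI allI impI)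
      fix j assume "j \<in> {..<N}"
      then show "\<rho> j \<in> {..sz N lam}" using h[rule_format, of j] le_sz[of j N lam] by simp
    next
      fix j assume "j \<notin> {..<N}"
      then show "\<rho> j = 0" using h[rule_format, of j] sh unfolding shape_def by simp
    qed
  qed
qed

lemma ES_eval:
  assumes sh: "shape N lam" and m: "sz N lam = m" "0 < m"
  shows "- (\<Sum>\<rho>\<in>{\<rho>. hs \<rho> lam \<and> sz N \<rho> < m}. if colv \<rho> then (-1::int) ^ sz N \<rho> else 0)
         = (if colv lam then (-1) ^ m else 0)"
proof -
  let ?H = "{\<rho>. hs \<rho> lam \<and> sz N \<rho> < m}"
  have fH: "finite ?H" by (rule finite_subset[OF _ finite_hs[OF sh]]) auto
  have dec: "dec lam" using sh unfolding shape_def dec_def by simp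
  have eqS: "(\<Sum>\<rho>\<in>?H. if colv \<rho> then (-1::int) ^ sz N \<rho> else 0) = (\<Sum>\<rho>\<in>?H \<inter> {\<rho>. colv \<rho>}. (-1) ^ sz N \<rho>)"
    using fH by (simp add: sum.If_cases)
  show ?thesis
  proof (cases "2 \<le> lam 1")
    case True
    have "?H \<inter> {\<rho>. colv \<rho>} = {}"
    proof (rule ccontr)
      assume "?H \<inter> {\<rho>. colv \<rho>} \<noteq> {}"
      then obtain \<rho> where "hs \<rho> lam" "colv \<rho>" by auto
      then have "lam (Suc 0) \<le> \<rho> 0" "\<rho> 0 \<le> 1" unfolding hs_def colv_def by blast+
      with True show False by simp
    qed
    moreover have "\<not> colv lam"
    proof
      assume "colv lam" then have "lam 1 \<le> 1" unfolding colv_def by blast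
      with True show False by simp
    qed
    ultimately show ?thesis using eqS by simp
  next
    case False
    then have l1: "lam 1 \<le> 1" by simp
    have l0: "0 < lam 0"
    proof (rule ccontr)
      assume "\<not> 0 < lam 0"
      then have "lam i = 0" for i using dec_mono[OF dec, of 0 i] by simp
      then have "sz N lam = 0" unfolding sz_def by simp
      with m show False by simp
    qed
    have ex: "\<exists>i. lam i = 0" using sh unfolding shape_def by auto
    define t where "t = (LEAST i. lam i = 0)"
    have lt: "i < t \<Longrightarrow> 0 < lam i" for i unfolding t_def using not_less_Least by blast
    have lamt: "lam t = 0" unfolding t_def using LeastI_ex[OF ex] .
    have ge: "t \<le> i \<Longrightarrow> lam i = 0" for i using dec_mono[OF dec, of t i] lamt by simp
    have tpos: "0 < t" using l0 lamt by (cases t) auto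
    have tN: "t \<le> N" unfolding t_def using sh unfolding shape_def by (auto intro: Least_le)
    have one: "1 \<le> i \<Longrightarrow> i < t \<Longrightarrow> lam i = 1" for i
      using dec_mono[OF dec, of 1 i] l1 lt[of i] by simp
    have char: "\<rho> = cvec (t - 1) \<or> \<rho> = cvec t" if hsr: "hs \<rho> lam" and clr: "colv \<rho>" for \<rho>
    proof -
      have a: "\<rho> i = 1" if i: "i < t - 1" for i
      proof -
        have "Suc i < t" using i by arith
        then have "lam (Suc i) = 1" using one[of "Suc i"] by simp
        moreover have "lam (Suc i) \<le> \<rho> i" "\<rho> i \<le> 1" using hsr clr unfolding hs_def colv_def by blast+
        ultimately show ?thesis by simp
      qed
      have b: "\<rho> i = 0" if i: "t \<le> i" for i
      proof -
        have "\<rho> i \<le> lam i" using hsr unfolding hs_def by blast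
        then show ?thesis using ge[OF i] by simp
      qed
      have c: "\<rho> (t - 1) \<le> 1" using clr unfolding colv_def by simp
      show ?thesis
      proof (cases "\<rho> (t - 1) = 0")
        case True
        have "\<rho> = cvec (t - 1)"
        proof
          fix i show "\<rho> i = cvec (t - 1) i"
          proof -
            consider "i < t - 1" | "i = t - 1" | "t \<le> i" by arith
            then show ?thesis
            proof cases
              case 1 then show ?thesis using a[OF 1] unfolding cvec_def by simp
            next
              case 2 then show ?thesis using True unfolding cvec_def by simp
            next
              case 3 then show ?thesis using b[OF 3] unfolding cvec_def by simp
            qed
          qed
        qed
        then show ?thesis by simp
      next
        case False
        have "\<rho> = cvec t"
        proof
          fix i show "\<rho> i = cvec t i"
          proof -
            consider "i < t - 1" | "i = t - 1" | "t \<le> i" by arith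
            then show ?thesis
            proof cases
              case 1 then have "i < t" by arith
              then show ?thesis using a[OF 1] unfolding cvec_def by simp
            next
              case 2 then have "i < t" using tpos by arith
              then show ?thesis using 2 False c unfolding cvec_def by simp
            next
              case 3 then show ?thesis using b[OF 3] unfolding cvec_def by simp
            qed
          qed
        qed
        then show ?thesis by simp
      qed
    qed
    have hs1: "hs (cvec (t - 1)) lam"
      unfolding hs_def cvec_def
    proof
      fix i
      show "lam (Suc i) \<le> (if i < t - 1 then 1 else 0) \<and> (if i < t - 1 then 1 else 0) \<le> lam i"
      proof (cases "i < t - 1")
        case True
        then have "Suc i < t" "i < t" by arith+
        then show ?thesis using True one[of "Suc i"] lt[of i] by simp
      next
        case False
        then have "t \<le> Suc i" by arith
        then show ?thesis using False ge[of "Suc i"] by simp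
      qed
    qed
    have hs2: "hs (cvec t) lam"
      unfolding hs_def cvec_def
    proof
      fix i
      show "lam (Suc i) \<le> (if i < t then 1 else 0) \<and> (if i < t then 1 else 0) \<le> lam i"
        using one[of "Suc i"] ge[of "Suc i"] lt[of i] by (cases "Suc i < t") auto
    qed
    have col1: "colv (cvec r)" for r unfolding colv_def cvec_def by simp
    have le2: "cvec t i \<le> lam i" for i using lt[of i] unfolding cvec_def by auto
    have le1: "cvec (t - 1) i \<le> lam i" for i
    proof (cases "i < t - 1")
      case True then have "i < t" by arith
      then show ?thesis using lt[of i] True unfolding cvec_def by simp
    qed (simp add: cvec_def)
    have sz1: "sz N (cvec (t - 1)) = t - 1" using sz_cvec tN by simp
    have sz2: "sz N (cvec t) = t" using sz_cvec tN by simp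
    have s1: "sz N (cvec (t - 1)) < m"
      using sz_strict[of "cvec (t - 1)" lam "t - 1" N, OF le1] lt[of "t - 1"] tpos tN m(1)
      unfolding cvec_def by simp
    show ?thesis
    proof (cases "lam 0 = 1")
      case True
      have lc: "lam = cvec t"
      proof
        fix i show "lam i = cvec t i"
          using True one[of i] ge[of i] unfolding cvec_def by (cases "i = 0"; cases "i < t") auto
      qed
      then have mt: "m = t" using sz2 m(1) by simp
      have "?H \<inter> {\<rho>. colv \<rho>} = {cvec (t - 1)}"
      proof (rule set_eqI)
        fix \<rho>
        show "\<rho> \<in> ?H \<inter> {\<rho>. colv \<rho>} \<longleftrightarrow> \<rho> \<in> {cvec (t - 1)}"
        proof
          assume h: "\<rho> \<in> ?H \<inter> {\<rho>. colv \<rho>}"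
          then have "\<rho> = cvec (t - 1) \<or> \<rho> = cvec t" using char by auto
          moreover have "\<rho> \<noteq> cvec t" using h sz2 mt by auto
          ultimately show "\<rho> \<in> {cvec (t - 1)}" by simp
        next
          assume "\<rho> \<in> {cvec (t - 1)}"
          then show "\<rho> \<in> ?H \<inter> {\<rho>. colv \<rho>}" using hs1 col1 s1 by simp
        qed
      qed
      then have "(\<Sum>\<rho>\<in>?H \<inter> {\<rho>. colv \<rho>}. (-1::int) ^ sz N \<rho>) = (-1) ^ (t - 1)" using sz1 by simp
      moreover have "colv lam" using lc col1 by simp
      ultimately show ?thesis using eqS mt tpos by (cases t) auto
    next
      case False
      then have l02: "2 \<le> lam 0" using l0 by simp
      have s2: "sz N (cvec t) < m"
        using sz_strict[of "cvec t" lam 0 N, OF le2] l02 tpos tN m(1) unfolding cvec_def by simp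
      have "?H \<inter> {\<rho>. colv \<rho>} = {cvec (t - 1), cvec t}"
      proof (rule set_eqI)
        fix \<rho>
        show "\<rho> \<in> ?H \<inter> {\<rho>. colv \<rho>} \<longleftrightarrow> \<rho> \<in> {cvec (t - 1), cvec t}"
        proof
          assume h: "\<rho> \<in> ?H \<inter> {\<rho>. colv \<rho>}"
          then show "\<rho> \<in> {cvec (t - 1), cvec t}" using char by auto
        next
          assume "\<rho> \<in> {cvec (t - 1), cvec t}"
          then show "\<rho> \<in> ?H \<inter> {\<rho>. colv \<rho>}" using hs1 hs2 col1 s1 s2 by auto
        qed
      qed
      moreover have "cvec (t - 1) \<noteq> cvec t"
      proof
        assume "cvec (t - 1) = cvec t"
        then have "cvec (t - 1) (t - 1) = cvec t (t - 1)" by simp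
        then show False using tpos unfolding cvec_def by simp
      qed
      ultimately have "(\<Sum>\<rho>\<in>?H \<inter> {\<rho>. colv \<rho>}. (-1::int) ^ sz N \<rho>) = (-1) ^ (t - 1) + (-1) ^ t"
        using sz1 sz2 by simp
      also have "\<dots> = 0" using tpos by (cases t) auto
      finally have "(\<Sum>\<rho>\<in>?H \<inter> {\<rho>. colv \<rho>}. (-1::int) ^ sz N \<rho>) = 0" .
      moreover have "\<not> colv lam"
      proof
        assume "colv lam" then have "lam 0 \<le> 1" unfolding colv_def by blast
        with l02 show False by simp
      qed
      ultimately show ?thesis using eqS by simp
    qed
  qed
qed


theorem ES:
  assumes "shape N lam" "sz N lam \<le> N"
  shows "(\<Sum>xs\<in>cmp (sz N lam). (-1::int) ^ length xs * int (Kv N lam (pv xs)))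
         = (if colv lam then (-1) ^ sz N lam else 0)"
  using assms
proof (induction "sz N lam" arbitrary: lam rule: less_induct)
  case less
  note sh = less.prems(1)
  define m where "m = sz N lam"
  show ?case
  proof (cases "m = 0")
    case True
    have z: "lam = (\<lambda>i. 0)"
    proof
      fix i show "lam i = 0"
      proof (cases "i < N")
        case True
        then show ?thesis using \<open>m = 0\<close> unfolding m_def sz_def by simp
      next
        case False then show ?thesis using sh unfolding shape_def by simp
      qed
    qed
    have pv0: "pv [] = (\<lambda>i. 0)" unfolding pv_def by simp
    have "Kv N lam (pv []) = 1" using Kv_diag[OF sh] z pv0 by simp
    moreover have "colv lam" using z unfolding colv_def by simp
    ultimately show ?thesis using True cmp_0 unfolding m_def by simp
  next
    case False
    then have m0: "0 < m" by simp
    let ?g = "\<lambda>\<rho>. if colv \<rho> then (-1::int) ^ sz N \<rho> else 0"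
    have IH: "(\<Sum>xs\<in>cmp (m - a). (-1::int) ^ length xs * int (Kv N \<rho> (pv xs))) = ?g \<rho>"
      if "\<rho> \<in> HSset N lam a" "1 \<le> a" for \<rho> a
    proof -
      have hs: "hs \<rho> lam" and s: "sz N \<rho> + a = m" using that unfolding HSset_def m_def by auto
      have sh\<rho>: "shape N \<rho>" by (rule hs_shape[OF hs sh])
      have "sz N \<rho> < sz N lam" using s that(2) unfolding m_def by simp
      moreover have "sz N \<rho> \<le> N" using s less.prems(2) unfolding m_def by simp
      ultimately have "(\<Sum>xs\<in>cmp (sz N \<rho>). (-1::int) ^ length xs * int (Kv N \<rho> (pv xs))) = ?g \<rho>"
        using less.hyps[OF _ sh\<rho>] by simp
      moreover have "m - a = sz N \<rho>" using s by simp
      ultimately show ?thesis by simp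
    qed
    have "(\<Sum>xs\<in>cmp m. (-1::int) ^ length xs * int (Kv N lam (pv xs)))
        = (\<Sum>a\<in>{1..m}. \<Sum>xs\<in>cmp (m - a). (-1::int) ^ length (xs @ [a]) * int (Kv N lam (pv (xs @ [a]))))"
      by (rule sum_cmp[OF m0])
    also have "\<dots> = (\<Sum>a\<in>{1..m}. \<Sum>xs\<in>cmp (m - a). \<Sum>\<rho>\<in>HSset N lam a. - ((-1::int) ^ length xs * int (Kv N \<rho> (pv xs))))"
    proof (intro sum.cong refl)
      fix a xs assume a: "a \<in> {1..m}" and xs: "xs \<in> cmp (m - a)"
      have "length xs < N" using cmp_len[OF xs] a less.prems(2) unfolding m_def by simp linarith
      then show "(-1::int) ^ length (xs @ [a]) * int (Kv N lam (pv (xs @ [a])))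
          = (\<Sum>\<rho>\<in>HSset N lam a. - ((-1::int) ^ length xs * int (Kv N \<rho> (pv xs))))"
        using Kv_snoc[OF sh, of xs a] by (simp add: sum_distrib_left sum_negf)
    qed
    also have "\<dots> = (\<Sum>a\<in>{1..m}. \<Sum>\<rho>\<in>HSset N lam a. - (\<Sum>xs\<in>cmp (m - a). (-1::int) ^ length xs * int (Kv N \<rho> (pv xs))))"
      by (intro sum.cong refl) (simp add: sum.swap[of _ "cmp _"] sum_negf)
    also have "\<dots> = (\<Sum>a\<in>{1..m}. \<Sum>\<rho>\<in>HSset N lam a. - ?g \<rho>)"
      by (intro sum.cong refl) (use IH in auto)
    also have "\<dots> = (\<Sum>a\<in>{1..m}. \<Sum>\<rho>\<in>{\<rho>\<in>{\<rho>. hs \<rho> lam \<and> sz N \<rho> < m}. m - sz N \<rho> = a}. - ?g \<rho>)"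
    proof (intro sum.cong refl)
      fix a assume a: "a \<in> {1..m}"
      show "HSset N lam a = {\<rho>\<in>{\<rho>. hs \<rho> lam \<and> sz N \<rho> < m}. m - sz N \<rho> = a}"
        unfolding HSset_def m_def using a unfolding m_def by auto
    qed
    also have "\<dots> = (\<Sum>\<rho>\<in>{\<rho>. hs \<rho> lam \<and> sz N \<rho> < m}. - ?g \<rho>)"
    proof (rule sum.group)
      show "finite {\<rho>. hs \<rho> lam \<and> sz N \<rho> < m}" by (rule finite_subset[OF _ finite_hs[OF sh]]) auto
      show "finite {1..m}" by simp
      show "(\<lambda>\<rho>. m - sz N \<rho>) ` {\<rho>. hs \<rho> lam \<and> sz N \<rho> < m} \<subseteq> {1..m}" by auto
    qed
    also have "\<dots> = - (\<Sum>\<rho>\<in>{\<rho>. hs \<rho> lam \<and> sz N \<rho> < m}. ?g \<rho>)" by (simp add: sum_negf)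
    also have "\<dots> = (if colv lam then (-1) ^ m else 0)" by (rule ES_eval[OF sh m_def[symmetric] m0])
    finally show ?thesis unfolding m_def .
  qed
qed


definition phiP :: "nat \<Rightarrow> nat set \<Rightarrow> (nat \<Rightarrow> nat) \<Rightarrow> nat set \<times> (nat \<Rightarrow> nat)" where
  "phiP L J f = ({j\<in>J. f j = L}, \<lambda>j. if j \<in> J \<and> f j \<noteq> L then f j else 0)"

definition psiP :: "nat \<Rightarrow> nat set \<times> (nat \<Rightarrow> nat) \<Rightarrow> nat \<Rightarrow> nat" where
  "psiP L p = (\<lambda>j. if j \<in> fst p then L else snd p j)"

lemma pcset_content: "f \<in> pcset N J wt \<alpha> \<Longrightarrow> (\<Sum>j\<in>{j\<in>J. f j = i}. wt j) = \<alpha> i"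
  unfolding pcset_def by blast

lemma pc_snoc_bij:
  assumes fJ: "finite J" and pos: "\<forall>j\<in>J. 0 < wt j" and L: "length xs < N"
  shows "bij_betw (phiP (length xs) J) (pcset N J wt (pv (xs @ [a])))
           (Sigma {B. B \<subseteq> J \<and> sum wt B = a} (\<lambda>B. pcset N (J - B) wt (pv xs)))"
proof (rule bij_betw_byWitness[where f' = "psiP (length xs)"])
  let ?L = "length xs"
  {
    fix f assume f: "f \<in> pcset N J wt (pv (xs @ [a]))"
    have fle: "f j \<le> ?L" if "j \<in> J" for j
    proof (rule ccontr)
      assume "\<not> f j \<le> ?L"
      then have "(\<Sum>j'\<in>{j'\<in>J. f j' = f j}. wt j') = 0" using pcset_content[OF f, of "f j"] by (simp add: pv_snoc)
      with block_pos[OF fJ that, of f "f j" wt] pos show False by simp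
    qed
    let ?B = "{j\<in>J. f j = ?L}"
    let ?g = "\<lambda>j. if j \<in> J \<and> f j \<noteq> ?L then f j else 0"
    have B: "?B \<subseteq> J" "sum wt ?B = a" using pcset_content[OF f, of ?L] by (auto simp: pv_snoc)
    have g: "?g \<in> pcset N (J - ?B) wt (pv xs)"
      unfolding pcset_def
    proof (intro CollectI conjI allI ballI impI)
      fix j assume "j \<in> J - ?B" then show "?g j < N" using f unfolding pcset_def by auto
    next
      fix j assume "j \<notin> J - ?B" then show "?g j = 0" by auto
    next
      fix i
      show "(\<Sum>j\<in>{j\<in>J - ?B. ?g j = i}. wt j) = pv xs i"
      proof (cases "i = ?L")
        case True
        have e: "{j\<in>J - ?B. ?g j = i} = {}" using True by auto
        show ?thesis using True by (subst e) (simp add: pv_out)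
      next
        case False
        have e: "{j\<in>J - ?B. ?g j = i} = {j\<in>J. f j = i}" using False by auto
        show ?thesis using False pcset_content[OF f, of i] by (subst e) (simp add: pv_snoc pv_out)
      qed
    qed
    have "phiP ?L J f \<in> Sigma {B. B \<subseteq> J \<and> sum wt B = a} (\<lambda>B. pcset N (J - B) wt (pv xs))"
      unfolding phiP_def using B g by simp
    moreover have "psiP ?L (phiP ?L J f) = f"
      unfolding psiP_def phiP_def using f unfolding pcset_def by (auto simp: fun_eq_iff)
    ultimately have "phiP ?L J f \<in> Sigma {B. B \<subseteq> J \<and> sum wt B = a} (\<lambda>B. pcset N (J - B) wt (pv xs))"
      "psiP ?L (phiP ?L J f) = f" by auto
  }
  note A = this
  {
    fix p assume p: "p \<in> Sigma {B. B \<subseteq> J \<and> sum wt B = a} (\<lambda>B. pcset N (J - B) wt (pv xs))"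
    obtain B g where pe: "p = (B, g)" by (cases p)
    have B: "B \<subseteq> J" "sum wt B = a" and g: "g \<in> pcset N (J - B) wt (pv xs)" using p pe by auto
    have gL: "g j \<noteq> ?L" if "j \<in> J - B" for j
    proof
      assume gj: "g j = ?L"
      have "(\<Sum>j'\<in>{j'\<in>J - B. g j' = ?L}. wt j') = 0" using pcset_content[OF g, of ?L] by (simp add: pv_out)
      with block_pos[of "J - B" j g ?L wt] fJ that gj pos show False by auto
    qed
    let ?f = "psiP ?L p"
    have fe: "?f = (\<lambda>j. if j \<in> B then ?L else g j)" unfolding psiP_def pe fst_conv snd_conv ..
    have f: "?f \<in> pcset N J wt (pv (xs @ [a]))"
      unfolding pcset_def fe
    proof (intro CollectI conjI allI ballI impI)
      fix j assume "j \<in> J" then show "(if j \<in> B then ?L else g j) < N" using g L unfolding pcset_def by auto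
    next
      fix j assume "j \<notin> J" then show "(if j \<in> B then ?L else g j) = 0" using g B(1) unfolding pcset_def by auto
    next
      fix i
      show "(\<Sum>j\<in>{j\<in>J. (if j \<in> B then ?L else g j) = i}. wt j) = pv (xs @ [a]) i"
      proof (cases "i = ?L")
        case True
        have e: "{j\<in>J. (if j \<in> B then ?L else g j) = i} = B" using True B(1) gL by auto
        show ?thesis using True B(2) by (subst e) (simp add: pv_snoc)
      next
        case False
        have e: "{j\<in>J. (if j \<in> B then ?L else g j) = i} = {j\<in>J - B. g j = i}" using False by auto
        show ?thesis using False pcset_content[OF g, of i] by (subst e) (simp add: pv_snoc pv_out)
      qed
    qed
    have "phiP ?L J (\<lambda>j. if j \<in> B then ?L else g j) = (B, g)"
      unfolding phiP_def using gL g B(1) unfolding pcset_def by (auto simp: fun_eq_iff)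
    then have "phiP ?L J ?f = p" using fe pe by simp
    note f this
  }
  note B = this
  show "\<forall>a\<in>pcset N J wt (pv (xs @ [a])). psiP (length xs) (phiP (length xs) J a) = a" using A by blast
  show "\<forall>a'\<in>Sigma {B. B \<subseteq> J \<and> sum wt B = a} (\<lambda>B. pcset N (J - B) wt (pv xs)). phiP (length xs) J (psiP (length xs) a') = a'"
    using B by blast
  show "phiP (length xs) J ` pcset N J wt (pv (xs @ [a])) \<subseteq> Sigma {B. B \<subseteq> J \<and> sum wt B = a} (\<lambda>B. pcset N (J - B) wt (pv xs))"
    using A by blast
  show "psiP (length xs) ` Sigma {B. B \<subseteq> J \<and> sum wt B = a} (\<lambda>B. pcset N (J - B) wt (pv xs)) \<subseteq> pcset N J wt (pv (xs @ [a]))"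
    using B by blast
qed

lemma finite_pcset:
  assumes "finite J"
  shows "finite (pcset N J wt \<alpha>)"
proof (rule finite_subset[OF _ finite_funs[OF assms, of "{..<N}" 0]])
  show "pcset N J wt \<alpha> \<subseteq> {f. (\<forall>j\<in>J. f j \<in> {..<N}) \<and> (\<forall>j. j \<notin> J \<longrightarrow> f j = 0)}"
    unfolding pcset_def by auto
qed simp

lemma pc_snoc:
  assumes fJ: "finite J" and pos: "\<forall>j\<in>J. 0 < wt j" and L: "length xs < N"
  shows "pc N J wt (pv (xs @ [a])) = (\<Sum>B\<in>{B. B \<subseteq> J \<and> sum wt B = a}. pc N (J - B) wt (pv xs))"
proof -
  have "pc N J wt (pv (xs @ [a])) = card (Sigma {B. B \<subseteq> J \<and> sum wt B = a} (\<lambda>B. pcset N (J - B) wt (pv xs)))"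
    unfolding pc_def using bij_betw_same_card[OF pc_snoc_bij[OF assms]] .
  also have "\<dots> = (\<Sum>B\<in>{B. B \<subseteq> J \<and> sum wt B = a}. card (pcset N (J - B) wt (pv xs)))"
  proof (rule card_SigmaI)
    show "finite {B. B \<subseteq> J \<and> sum wt B = a}" using fJ by simp
    show "\<forall>B\<in>{B. B \<subseteq> J \<and> sum wt B = a}. finite (pcset N (J - B) wt (pv xs))"
      using finite_pcset fJ by auto
  qed
  finally show ?thesis unfolding pc_def .
qed


lemma neg1_diff: "b \<le> a \<Longrightarrow> (-1::int) ^ (a - b) = (-1) ^ a * (-1) ^ b"
proof -
  assume "b \<le> a"
  then have "(-1::int) ^ a = (-1) ^ (a - b + b)" by simp
  also have "\<dots> = (-1) ^ (a - b) * (-1) ^ b" by (rule power_add)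
  finally have e: "(-1::int) ^ a * (-1) ^ b = (-1) ^ (a - b) * ((-1) ^ b * (-1) ^ b)" by simp
  have "(-1::int) ^ b * (-1) ^ b = ((-1) * (-1)) ^ b" by (simp add: power_mult_distrib)
  also have "\<dots> = 1" by simp
  finally show ?thesis using e by simp
qed

lemma pos_sum_zero: "finite B \<Longrightarrow> \<forall>j\<in>B. 0 < (wt j::nat) \<Longrightarrow> sum wt B = 0 \<Longrightarrow> B = {}"
  by (auto simp: sum_eq_0_iff)

lemma pc_empty: "pc N {} wt (pv []) = 1"
proof -
  have "pcset N {} wt (pv []) = {\<lambda>j. 0}" unfolding pcset_def pv_def by (auto simp: fun_eq_iff)
  then show ?thesis unfolding pc_def by simp
qed

theorem Qthm:
  assumes "finite J" "\<forall>j\<in>J. 0 < wt j" "sum wt J \<le> N"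
  shows "(\<Sum>xs\<in>cmp (sum wt J). (-1::int) ^ length xs * int (pc N J wt (pv xs))) = (-1) ^ card J"
  using assms
proof (induction "sum wt J" arbitrary: J rule: less_induct)
  case less
  note fJ = less.prems(1) and pos = less.prems(2)
  define m where "m = sum wt J"
  show ?case
  proof (cases "m = 0")
    case True
    then have "J = {}" using pos_sum_zero[OF fJ pos] unfolding m_def by simp
    then show ?thesis using cmp_0 pc_empty by simp
  next
    case False
    then have m0: "0 < m" by simp
    have Jne: "J \<noteq> {}" using False unfolding m_def by auto
    let ?Bs = "\<lambda>a. {B. B \<subseteq> J \<and> sum wt B = a}"
    have IH: "(\<Sum>xs\<in>cmp (m - a). (-1::int) ^ length xs * int (pc N (J - B) wt (pv xs))) = (-1) ^ card (J - B)"
      if "B \<in> ?Bs a" "1 \<le> a" for B a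
    proof -
      have B: "B \<subseteq> J" "sum wt B = a" using that by auto
      have s: "sum wt (J - B) = m - a" using sum_diff_nat[OF finite_subset[OF B(1) fJ] B(1)] B unfolding m_def by simp
      have "a \<le> m" using sum_mono2[OF fJ B(1), of wt] B(2) unfolding m_def by simp
      then have "sum wt (J - B) < sum wt J" using s that(2) unfolding m_def by simp
      then have "(\<Sum>xs\<in>cmp (sum wt (J - B)). (-1::int) ^ length xs * int (pc N (J - B) wt (pv xs))) = (-1) ^ card (J - B)"
        using less.hyps[of "J - B"] fJ pos less.prems(3) s unfolding m_def by auto
      then show ?thesis using s by simp
    qed
    have "(\<Sum>xs\<in>cmp m. (-1::int) ^ length xs * int (pc N J wt (pv xs)))
        = (\<Sum>a\<in>{1..m}. \<Sum>xs\<in>cmp (m - a). (-1::int) ^ length (xs @ [a]) * int (pc N J wt (pv (xs @ [a]))))"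
      by (rule sum_cmp[OF m0])
    also have "\<dots> = (\<Sum>a\<in>{1..m}. \<Sum>xs\<in>cmp (m - a). \<Sum>B\<in>?Bs a. - ((-1::int) ^ length xs * int (pc N (J - B) wt (pv xs))))"
    proof (intro sum.cong refl)
      fix a xs assume a: "a \<in> {1..m}" and xs: "xs \<in> cmp (m - a)"
      have "length xs < N" using cmp_len[OF xs] a less.prems(3) unfolding m_def by simp linarith
      then show "(-1::int) ^ length (xs @ [a]) * int (pc N J wt (pv (xs @ [a])))
          = (\<Sum>B\<in>?Bs a. - ((-1::int) ^ length xs * int (pc N (J - B) wt (pv xs))))"
        using pc_snoc[OF fJ pos, of xs N a] by (simp add: sum_distrib_left sum_negf)
    qed
    also have "\<dots> = (\<Sum>a\<in>{1..m}. \<Sum>B\<in>?Bs a. - (\<Sum>xs\<in>cmp (m - a). (-1::int) ^ length xs * int (pc N (J - B) wt (pv xs))))"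
      by (intro sum.cong refl) (simp add: sum.swap[of _ "cmp _"] sum_negf)
    also have "\<dots> = (\<Sum>a\<in>{1..m}. \<Sum>B\<in>?Bs a. - ((-1::int) ^ card (J - B)))"
      by (intro sum.cong refl) (use IH in auto)
    also have "\<dots> = (\<Sum>a\<in>{1..m}. \<Sum>B\<in>{B\<in>Pow J - {{}}. sum wt B = a}. - ((-1::int) ^ card (J - B)))"
    proof (intro sum.cong refl)
      fix a assume a: "a \<in> {1..m}"
      show "?Bs a = {B\<in>Pow J - {{}}. sum wt B = a}" using a by auto
    qed
    also have "\<dots> = (\<Sum>B\<in>Pow J - {{}}. - ((-1::int) ^ card (J - B)))"
    proof (rule sum.group)
      show "finite (Pow J - {{}})" using fJ by simp
      show "finite {1..m}" by simp
      show "sum wt ` (Pow J - {{}}) \<subseteq> {1..m}"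
      proof
        fix s assume "s \<in> sum wt ` (Pow J - {{}})"
        then obtain B where B: "B \<subseteq> J" "B \<noteq> {}" "s = sum wt B" by auto
        have fB: "finite B" using finite_subset[OF B(1) fJ] .
        have "s \<noteq> 0" using pos_sum_zero[OF fB] pos B by auto
        moreover have "s \<le> m" using sum_mono2[OF fJ B(1), of wt] B(3) unfolding m_def by simp
        ultimately show "s \<in> {1..m}" by simp
      qed
    qed
    also have "\<dots> = - (\<Sum>B\<in>Pow J - {{}}. (-1::int) ^ card J * (-1) ^ card B)"
    proof -
      have "(-1::int) ^ card (J - B) = (-1) ^ card J * (-1) ^ card B" if "B \<in> Pow J - {{}}" for B
      proof -
        have "B \<subseteq> J" using that by auto
        then have "card (J - B) = card J - card B" "card B \<le> card J"
          using card_Diff_subset[OF finite_subset[OF _ fJ]] card_mono[OF fJ] by auto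
        then show ?thesis using neg1_diff by simp
      qed
      then show ?thesis by (simp add: sum_negf)
    qed
    also have "\<dots> = - ((-1::int) ^ card J * (\<Sum>B\<in>Pow J - {{}}. (-1) ^ card B))" by (simp add: sum_distrib_left)
    also have "(\<Sum>B\<in>Pow J - {{}}. (-1::int) ^ card B) = (\<Sum>B\<in>Pow J. (-1::int) ^ card B) - 1"
      using sum.remove[of "Pow J" "{}" "\<lambda>B. (-1::int) ^ card B"] fJ by simp
    also have "(\<Sum>B\<in>Pow J. (-1::int) ^ card B) = 0" by (rule sum_pow_neg[OF fJ Jne])
    finally show ?thesis unfolding m_def by simp
  qed
qed


theorem Q1thm:
  assumes fJ: "finite J" and pos: "\<forall>j\<in>J. 0 < wt j" and m: "sum wt J = m" "1 \<le> m" "m \<le> N"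
  shows "(\<Sum>xs\<in>cmp (m - 1). (-1::int) ^ length xs * int (pc N J wt (pv (xs @ [1]))))
         = (-1) ^ (card J - 1) * int (card {j\<in>J. wt j = 1})"
proof -
  let ?Bs = "{B. B \<subseteq> J \<and> sum wt B = 1}"
  have Bs: "?Bs = (\<lambda>j. {j}) ` {j\<in>J. wt j = 1}"
  proof (rule set_eqI)
    fix B show "B \<in> ?Bs \<longleftrightarrow> B \<in> (\<lambda>j. {j}) ` {j\<in>J. wt j = 1}"
    proof
      assume B: "B \<in> ?Bs"
      then have "finite B" "\<forall>j\<in>B. 0 < wt j" using finite_subset[OF _ fJ] pos by auto
      then obtain j0 where "B = {j0}" "wt j0 = 1" using sum_pos_eq1 B by blast
      then show "B \<in> (\<lambda>j. {j}) ` {j\<in>J. wt j = 1}" using B by auto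
    qed auto
  qed
  have cBs: "card ?Bs = card {j\<in>J. wt j = 1}" unfolding Bs by (rule card_image) (auto simp: inj_on_def)
  have fBs: "finite ?Bs" using fJ by simp
  have "(\<Sum>xs\<in>cmp (m - 1). (-1::int) ^ length xs * int (pc N J wt (pv (xs @ [1]))))
      = (\<Sum>xs\<in>cmp (m - 1). \<Sum>B\<in>?Bs. (-1::int) ^ length xs * int (pc N (J - B) wt (pv xs)))"
  proof (rule sum.cong[OF refl])
    fix xs assume xs: "xs \<in> cmp (m - 1)"
    have "length xs < N" using cmp_len[OF xs] m by simp
    then show "(-1::int) ^ length xs * int (pc N J wt (pv (xs @ [1]))) = (\<Sum>B\<in>?Bs. (-1::int) ^ length xs * int (pc N (J - B) wt (pv xs)))"
      using pc_snoc[OF fJ pos, of xs N 1] by (simp add: sum_distrib_left)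
  qed
  also have "\<dots> = (\<Sum>B\<in>?Bs. \<Sum>xs\<in>cmp (m - 1). (-1::int) ^ length xs * int (pc N (J - B) wt (pv xs)))"
    by (rule sum.swap)
  also have "\<dots> = (\<Sum>B\<in>?Bs. (-1::int) ^ (card J - 1))"
  proof (rule sum.cong[OF refl])
    fix B assume B: "B \<in> ?Bs"
    have "B \<in> (\<lambda>j. {j}) ` {j\<in>J. wt j = 1}" using B unfolding Bs .
    then obtain j where j: "B = {j}" "j \<in> J" "wt j = 1" by auto
    have s: "sum wt (J - B) = m - 1" using sum.remove[OF fJ j(2), of wt] j m by simp
    have "(\<Sum>xs\<in>cmp (sum wt (J - B)). (-1::int) ^ length xs * int (pc N (J - B) wt (pv xs))) = (-1) ^ card (J - B)"
      using Qthm[of "J - B" wt N] fJ pos s m by auto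
    moreover have "card (J - B) = card J - 1" using j fJ by simp
    ultimately show "(\<Sum>xs\<in>cmp (m - 1). (-1::int) ^ length xs * int (pc N (J - B) wt (pv xs))) = (-1) ^ (card J - 1)"
      using s by simp
  qed
  also have "\<dots> = (-1) ^ (card J - 1) * int (card {j\<in>J. wt j = 1})" using cBs by simp
  finally show ?thesis .
qed

definition F2 :: "nat \<Rightarrow> ((nat \<Rightarrow> nat) \<Rightarrow> int) \<Rightarrow> int" where
  "F2 n f = (\<Sum>xs\<in>cmp (n - 1). (-1) ^ (n + 1 + length xs) * f (pv (xs @ [1])))
          - (\<Sum>xs\<in>cmp n. (-1) ^ (n + length xs) * f (pv xs))"

lemma F2_lin:
  assumes "finite I"
  shows "F2 n (\<lambda>\<alpha>. \<Sum>i\<in>I. c i * g i \<alpha>) = (\<Sum>i\<in>I. c i * F2 n (g i))"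
proof -
  have a: "(\<Sum>xs\<in>A. (-1) ^ (k xs) * (\<Sum>i\<in>I. c i * g i (v xs))) = (\<Sum>i\<in>I. c i * (\<Sum>xs\<in>A. (-1) ^ (k xs) * g i (v xs)))"
    for A :: "nat list set" and k v
    by (simp add: sum_distrib_left sum_distrib_right mult.assoc mult.left_commute sum.swap[of _ A])
  show ?thesis unfolding F2_def a by (simp add: sum_subtractf right_diff_distrib)
qed

lemma F2_pcoeff:
  assumes \<mu>: "\<mu> \<in> partitions n" and n: "2 \<le> n"
  shows "F2 n (pcoeff n \<mu>) = (-1) ^ (n + length \<mu>) * (int (cnt1 \<mu>) - 1)"
proof -
  note h = part_pc_hyps[OF \<mu>]
  have L: "1 \<le> length \<mu>" using h(3) n by (cases \<mu>) auto
  have first: "(\<Sum>xs\<in>cmp (n - 1). (-1::int) ^ length xs * pcoeff n \<mu> (pv (xs @ [1])))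
      = (-1) ^ (length \<mu> - 1) * int (cnt1 \<mu>)"
    unfolding pcoeff_pc cnt1_def using Q1thm[OF h(1,2,3)] n by simp
  have second: "(\<Sum>xs\<in>cmp n. (-1::int) ^ length xs * pcoeff n \<mu> (pv xs)) = (-1) ^ length \<mu>"
    unfolding pcoeff_pc using Qthm[OF h(1,2), of n] h(3) by simp
  have "F2 n (pcoeff n \<mu>) = (-1) ^ (n + 1) * (\<Sum>xs\<in>cmp (n - 1). (-1::int) ^ length xs * pcoeff n \<mu> (pv (xs @ [1])))
      - (-1) ^ n * (\<Sum>xs\<in>cmp n. (-1::int) ^ length xs * pcoeff n \<mu> (pv xs))"
    unfolding F2_def by (simp add: sum_distrib_left power_add mult.assoc)
  also have "\<dots> = (-1) ^ (n + 1) * ((-1) ^ (length \<mu> - 1) * int (cnt1 \<mu>)) - (-1) ^ n * (-1) ^ length \<mu>"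
    using first second by simp
  also have "\<dots> = (-1) ^ (n + length \<mu>) * (int (cnt1 \<mu>) - 1)"
  proof -
    obtain k where k: "length \<mu> = Suc k" using L by (cases "length \<mu>") auto
    show ?thesis unfolding k by (simp add: power_add algebra_simps)
  qed
  finally show ?thesis .
qed


lemma colv_shape_cvec:
  assumes sh: "shape N \<rho>" and c: "colv \<rho>"
  shows "\<rho> = cvec (sz N \<rho>)"
proof -
  have dec: "dec \<rho>" using sh unfolding shape_def dec_def by simp
  have ex: "\<exists>i. \<rho> i = 0" using sh unfolding shape_def by auto
  define t where "t = (LEAST i. \<rho> i = 0)"
  have lt: "\<rho> i = 1" if "i < t" for i
  proof -
    have "\<rho> i \<noteq> 0" using not_less_Least[of i "\<lambda>i. \<rho> i = 0"] that unfolding t_def by blast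
    moreover have "\<rho> i \<le> 1" using c unfolding colv_def by blast
    ultimately show ?thesis by simp
  qed
  have rt: "\<rho> t = 0" unfolding t_def using LeastI_ex[OF ex] .
  have ge: "t \<le> i \<Longrightarrow> \<rho> i = 0" for i using dec_mono[OF dec, of t i] rt by simp
  have tN: "t \<le> N" unfolding t_def using sh unfolding shape_def by (auto intro: Least_le)
  have e: "\<rho> = cvec t" unfolding cvec_def using lt ge by (auto simp: fun_eq_iff not_less)
  then show ?thesis using sz_cvec[OF tN] by simp
qed

lemma pv_Cons: "pv (x # xs) i = (if i = 0 then x else pv xs (i - 1))"
  unfolding pv_def by (cases i) auto

lemma pv_rep: "pv (replicate m 1) i = (if i < m then 1 else 0)"
  unfolding pv_def by simp

lemma colv_char:
  assumes \<nu>: "\<nu> \<in> partitions n"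
  shows "colv (pv \<nu>) \<longleftrightarrow> \<nu> = replicate n 1"
proof
  assume c: "colv (pv \<nu>)"
  have ip: "is_partition n \<nu>" using \<nu> unfolding partitions_def by simp
  have "\<forall>y\<in>set \<nu>. y = 1"
  proof
    fix y assume "y \<in> set \<nu>"
    then obtain k where k: "k < length \<nu>" "\<nu> ! k = y" by (auto simp: in_set_conv_nth)
    have "pv \<nu> k \<le> 1" using c unfolding colv_def by blast
    then have "y \<le> 1" using k by (simp add: pv_def)
    moreover have "0 < y" using ip \<open>y \<in> set \<nu>\<close> unfolding is_partition_def by auto
    ultimately show "y = 1" by simp
  qed
  then have r: "\<nu> = replicate (length \<nu>) 1" by (simp add: replicate_length_same)
  have "sum_list (replicate (length \<nu>) (1::nat)) = length \<nu>" by (simp add: sum_list_replicate)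
  then have "sum_list \<nu> = length \<nu>" using r by simp
  then have "length \<nu> = n" using ip unfolding is_partition_def by simp
  then show "\<nu> = replicate n 1" using r by simp
next
  assume "\<nu> = replicate n 1"
  then show "colv (pv \<nu>)" unfolding colv_def pv_def by simp
qed

lemma hs_char:
  assumes \<nu>: "\<nu> \<in> partitions n" and n: "2 \<le> n"
  shows "hs (cvec (n - 1)) (pv \<nu>) \<longleftrightarrow> \<nu> = 2 # replicate (n - 2) 1 \<or> \<nu> = replicate n 1"
proof
  assume h: "hs (cvec (n - 1)) (pv \<nu>)"
  have ip: "is_partition n \<nu>" using \<nu> unfolding partitions_def by simp
  have Ln: "length \<nu> \<le> n" by (rule part_len[OF ip])
  have "cvec (n - 1) (n - 2) \<le> pv \<nu> (n - 2)" using h unfolding hs_def by blast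
  moreover have "cvec (n - 1) (n - 2) = 1" using n unfolding cvec_def by simp
  ultimately have "1 \<le> pv \<nu> (n - 2)" by simp
  then have L1: "n - 2 < length \<nu>" unfolding pv_def by (cases "n - 2 < length \<nu>") auto
  obtain x r where xr: "\<nu> = x # r" using L1 by (cases \<nu>) auto
  have r1: "\<forall>y\<in>set r. y = 1"
  proof
    fix y assume "y \<in> set r"
    then obtain k where k: "k < length r" "r ! k = y" by (auto simp: in_set_conv_nth)
    have "pv \<nu> (Suc k) \<le> cvec (n - 1) k" using h unfolding hs_def by blast
    then have "y \<le> 1" using k unfolding xr pv_def cvec_def by (auto split: if_splits)
    moreover have "0 < y" using ip \<open>y \<in> set r\<close> unfolding is_partition_def xr by auto
    ultimately show "y = 1" by simp
  qed
  then have rr: "r = replicate (length r) 1" by (simp add: replicate_length_same)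
  have "sum_list (replicate (length r) (1::nat)) = length r" by (simp add: sum_list_replicate)
  then have "sum_list r = length r" using rr by simp
  then have s: "x + length r = n" using ip unfolding is_partition_def xr by simp
  have "length r = n - 2 \<or> length r = n - 1" using L1 Ln xr by auto
  then show "\<nu> = 2 # replicate (n - 2) 1 \<or> \<nu> = replicate n 1"
  proof
    assume "length r = n - 2"
    then have "x = 2" "r = replicate (n - 2) 1" using s n rr by auto
    then show ?thesis using xr by simp
  next
    assume "length r = n - 1"
    then have "x = 1" "r = replicate (n - 1) 1" using s n rr by auto
    then have "\<nu> = replicate (Suc (n - 1)) 1" using xr by simp
    then show ?thesis using n by simp
  qed
next
  assume "\<nu> = 2 # replicate (n - 2) 1 \<or> \<nu> = replicate n 1"
  then show "hs (cvec (n - 1)) (pv \<nu>)"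
  proof
    assume e: "\<nu> = 2 # replicate (n - 2) 1"
    show ?thesis unfolding hs_def e cvec_def
    proof
      fix i
      show "pv (2 # replicate (n - 2) 1) (Suc i) \<le> (if i < n - 1 then 1 else 0) \<and>
            (if i < n - 1 then 1 else 0) \<le> pv (2 # replicate (n - 2) 1) i"
        unfolding pv_Cons pv_rep using n by auto
    qed
  next
    assume e: "\<nu> = replicate n 1"
    show ?thesis unfolding hs_def e cvec_def pv_rep by auto
  qed
qed


lemma F2_scoeff:
  assumes \<nu>: "\<nu> \<in> partitions n" and n: "2 \<le> n"
  shows "F2 n (scoeff n \<nu>) = (if \<nu> = 2 # replicate (n - 2) 1 then 1 else 0)"
proof -
  let ?l = "pv \<nu>"
  have sh: "shape n ?l" using \<nu> pv_shape unfolding partitions_def by simp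
  have szl: "sz n ?l = n" using pv_Dn[OF \<nu>] unfolding Dn_def sz_P by simp
  have second: "(\<Sum>xs\<in>cmp n. (-1::int) ^ length xs * int (Kv n ?l (pv xs))) = (if colv ?l then (-1) ^ n else 0)"
    using ES[OF sh] szl by simp
  have HSc: "HSset n ?l 1 \<inter> {\<rho>. colv \<rho>} = (if hs (cvec (n - 1)) ?l then {cvec (n - 1)} else {})"
  proof (rule set_eqI)
    fix \<rho>
    show "\<rho> \<in> HSset n ?l 1 \<inter> {\<rho>. colv \<rho>} \<longleftrightarrow> \<rho> \<in> (if hs (cvec (n - 1)) ?l then {cvec (n - 1)} else {})"
    proof
      assume h: "\<rho> \<in> HSset n ?l 1 \<inter> {\<rho>. colv \<rho>}"
      then have hs: "hs \<rho> ?l" and s: "sz n \<rho> + 1 = n" and c: "colv \<rho>" unfolding HSset_def using szl by auto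
      have e: "sz n \<rho> = n - 1" using s by simp
      have "\<rho> = cvec (sz n \<rho>)" by (rule colv_shape_cvec[OF hs_shape[OF hs sh] c])
      then have "\<rho> = cvec (n - 1)" unfolding e .
      then show "\<rho> \<in> (if hs (cvec (n - 1)) ?l then {cvec (n - 1)} else {})" using hs by simp
    next
      assume "\<rho> \<in> (if hs (cvec (n - 1)) ?l then {cvec (n - 1)} else {})"
      then have e: "\<rho> = cvec (n - 1)" and hs: "hs (cvec (n - 1)) ?l" by (auto split: if_splits)
      have "sz n (cvec (n - 1)) = n - 1" by (rule sz_cvec) simp
      then show "\<rho> \<in> HSset n ?l 1 \<inter> {\<rho>. colv \<rho>}"
        using e hs n unfolding HSset_def colv_def cvec_def szl by auto
    qed
  qed
  have first: "(\<Sum>xs\<in>cmp (n - 1). (-1::int) ^ length xs * int (Kv n ?l (pv (xs @ [1]))))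
      = (if hs (cvec (n - 1)) ?l then (-1) ^ (n - 1) else 0)"
  proof -
    have "(\<Sum>xs\<in>cmp (n - 1). (-1::int) ^ length xs * int (Kv n ?l (pv (xs @ [1]))))
        = (\<Sum>xs\<in>cmp (n - 1). \<Sum>\<rho>\<in>HSset n ?l 1. (-1::int) ^ length xs * int (Kv n \<rho> (pv xs)))"
    proof (rule sum.cong[OF refl])
      fix xs assume xs: "xs \<in> cmp (n - 1)"
      have "length xs < n" using cmp_len[OF xs] n by simp
      then show "(-1::int) ^ length xs * int (Kv n ?l (pv (xs @ [1]))) = (\<Sum>\<rho>\<in>HSset n ?l 1. (-1::int) ^ length xs * int (Kv n \<rho> (pv xs)))"
        using Kv_snoc[OF sh, of xs 1] by (simp add: sum_distrib_left)
    qed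
    also have "\<dots> = (\<Sum>\<rho>\<in>HSset n ?l 1. \<Sum>xs\<in>cmp (n - 1). (-1::int) ^ length xs * int (Kv n \<rho> (pv xs)))"
      by (rule sum.swap)
    also have "\<dots> = (\<Sum>\<rho>\<in>HSset n ?l 1. if colv \<rho> then (-1) ^ (n - 1) else 0)"
    proof (rule sum.cong[OF refl])
      fix \<rho> assume r: "\<rho> \<in> HSset n ?l 1"
      then have hs: "hs \<rho> ?l" and s: "sz n \<rho> = n - 1" unfolding HSset_def szl by auto
      show "(\<Sum>xs\<in>cmp (n - 1). (-1::int) ^ length xs * int (Kv n \<rho> (pv xs))) = (if colv \<rho> then (-1) ^ (n - 1) else 0)"
        using ES[OF hs_shape[OF hs sh]] s by simp
    qed
    also have "\<dots> = (\<Sum>\<rho>\<in>HSset n ?l 1 \<inter> {\<rho>. colv \<rho>}. (-1) ^ (n - 1))"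
      using finite_HSset[OF sh] by (simp add: sum.If_cases)
    also have "\<dots> = (if hs (cvec (n - 1)) ?l then (-1) ^ (n - 1) else 0)"
      unfolding HSc by simp
    finally show ?thesis .
  qed
  have "F2 n (scoeff n \<nu>) = (-1) ^ (n + 1) * (\<Sum>xs\<in>cmp (n - 1). (-1::int) ^ length xs * int (Kv n ?l (pv (xs @ [1]))))
      - (-1) ^ n * (\<Sum>xs\<in>cmp n. (-1::int) ^ length xs * int (Kv n ?l (pv xs)))"
    unfolding F2_def scoeff_Kv by (simp add: sum_distrib_left power_add mult.assoc)
  also have "\<dots> = (if hs (cvec (n - 1)) ?l then 1 else 0) - (if colv ?l then 1 else 0)"
  proof -
    obtain k where k: "n = Suc k" using n by (cases n) auto
    have a: "(-1::int) ^ (n + 1) * (-1) ^ (n - 1) = 1" unfolding k by (simp add: power_add[symmetric])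
    have b: "(-1::int) ^ n * (-1) ^ n = 1" by (simp add: power_add[symmetric])
    show ?thesis unfolding first second using a b by auto
  qed
  also have "\<dots> = (if \<nu> = 2 # replicate (n - 2) 1 then 1 else 0)"
  proof -
    have neq: "2 # replicate (n - 2) 1 \<noteq> replicate n (1::nat)" using n by (cases n) auto
    show ?thesis using hs_char[OF \<nu> n] colv_char[OF \<nu>] neq by auto
  qed
  finally show ?thesis .
qed

lemma hook2_part: "2 \<le> n \<Longrightarrow> 2 # replicate (n - 2) 1 \<in> partitions n"
  unfolding partitions_def is_partition_def by (simp add: sorted_append sum_list_replicate)

lemma coeff_bottom_psi:
  assumes T: "T \<subseteq> partitions n" and n: "2 \<le> n"
  shows "schur_coeff n (psi n T) (2 # replicate (n - 2) 1) = (\<Sum>\<mu>\<in>T. (-1) ^ (n + length \<mu>) * (int (cnt1 \<mu>) - 1))"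
proof -
  have fT: "finite T" using finite_subset[OF T finite_partitions] .
  obtain c where c: "expands n (psi n T) c" using expand_exists[OF symf_psi[OF T]] by blast
  have "schur_coeff n (psi n T) (2 # replicate (n - 2) 1) = c (2 # replicate (n - 2) 1)" using schur_coeff_eq[OF c] .
  also have "\<dots> = F2 n (psi n T)"
  proof -
    have "psi n T = (\<lambda>\<alpha>. \<Sum>\<nu>\<in>partitions n. c \<nu> * scoeff n \<nu> \<alpha>)" using c unfolding expands_def by auto
    then have "F2 n (psi n T) = (\<Sum>\<nu>\<in>partitions n. c \<nu> * F2 n (scoeff n \<nu>))"
      using F2_lin[OF finite_partitions, of n c "scoeff n"] by simp
    also have "\<dots> = c (2 # replicate (n - 2) 1) * F2 n (scoeff n (2 # replicate (n - 2) 1))"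
      by (rule sum_single[OF finite_partitions hook2_part[OF n]]) (use F2_scoeff n in auto)
    also have "\<dots> = c (2 # replicate (n - 2) 1)" using F2_scoeff[OF hook2_part[OF n] n] by simp
    finally show ?thesis by simp
  qed
  also have "F2 n (psi n T) = (\<Sum>\<mu>\<in>T. 1 * F2 n (pcoeff n \<mu>))"
    unfolding psi_def using F2_lin[OF fT, of n "\<lambda>_. 1" "pcoeff n"] by simp
  also have "\<dots> = (\<Sum>\<mu>\<in>T. (-1) ^ (n + length \<mu>) * (int (cnt1 \<mu>) - 1))"
    using F2_pcoeff T n by (intro sum.cong) auto
  finally show ?thesis .
qed


lemma cnt1_filter: "cnt1 \<mu> = length (filter (\<lambda>x. x = 1) \<mu>)"
  unfolding cnt1_def length_filter_conv_card by (rule arg_cong[where f=card]) auto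

definition sg :: "nat \<Rightarrow> nat list \<Rightarrow> int" where
  "sg n \<mu> = (-1) ^ (n + length \<mu>) * (int (cnt1 \<mu>) - 1)"

lemma sum_set_ge_list:
  assumes "\<And>x. g x \<le> (0::int)"
  shows "sum_list (map g xs) \<le> sum g (set xs)"
proof (induction xs)
  case Nil then show ?case by simp
next
  case (Cons x xs)
  show ?case
  proof (cases "x \<in> set xs")
    case True
    then have "sum g (set (x # xs)) = sum g (set xs)" by (simp add: insert_absorb)
    then show ?thesis using Cons assms[of x] by simp
  next
    case False
    then show ?thesis using Cons by simp
  qed
qed

lemma sg_rep: "sg n (replicate n 1) = int n - 1"
  unfolding sg_def using cnt1_rep[of n] by (simp add: power_add[symmetric])

lemma small_bound:
  assumes "2 \<le> n" "n \<le> 5"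
  shows "- (int n - 1) \<le> sum_list (map (\<lambda>\<mu>. min (sg n \<mu>) 0) (gen n n))"
proof -
  consider "n = 2" | "n = 3" | "n = 4" | "n = 5" using assms by linarith
  then show ?thesis
    by cases (simp_all add: gen_num gen_one gen_zero gen_Suc upt_rec sg_def cnt1_filter)
qed

lemma part2_neg:
  assumes T: "T \<subseteq> partitions n" "replicate n 1 \<in> T" and n: "2 \<le> n" "n \<le> 5"
  shows "0 \<le> (\<Sum>\<mu>\<in>T. sg n \<mu>)"
proof -
  let ?r = "replicate n (1::nat)"
  let ?g = "\<lambda>\<mu>. min (sg n \<mu>) 0"
  have fT: "finite T" using finite_subset[OF T(1) finite_partitions] .
  have e1: "(\<Sum>\<mu>\<in>T. sg n \<mu>) = (int n - 1) + (\<Sum>\<mu>\<in>T - {?r}. sg n \<mu>)"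
    using sum.remove[OF fT T(2), of "sg n"] sg_rep[of n] by simp
  have e2: "(\<Sum>\<mu>\<in>T - {?r}. ?g \<mu>) \<le> (\<Sum>\<mu>\<in>T - {?r}. sg n \<mu>)" by (rule sum_mono) simp
  have sub: "T - {?r} \<subseteq> set (gen n n)"
  proof
    fix \<mu> assume "\<mu> \<in> T - {?r}"
    then have h: "is_partition n \<mu>" using T(1) unfolding partitions_def by auto
    have "\<forall>x\<in>set \<mu>. x \<le> n"
    proof
      fix x assume "x \<in> set \<mu>"
      then have "x \<le> sum_list \<mu>" by (rule member_le_sum_list) auto
      then show "x \<le> n" using h unfolding is_partition_def by simp
    qed
    then show "\<mu> \<in> set (gen n n)" using gen_complete[OF h] by simp
  qed
  have e3: "(\<Sum>\<mu>\<in>set (gen n n). ?g \<mu>) \<le> (\<Sum>\<mu>\<in>T - {?r}. ?g \<mu>)"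
  proof -
    have "(\<Sum>\<mu>\<in>set (gen n n). ?g \<mu>) = (\<Sum>\<mu>\<in>T - {?r}. ?g \<mu>) + (\<Sum>\<mu>\<in>set (gen n n) - (T - {?r}). ?g \<mu>)"
      using sum.subset_diff[OF sub, of ?g] by simp
    moreover have "(\<Sum>\<mu>\<in>set (gen n n) - (T - {?r}). ?g \<mu>) \<le> 0" by (rule sum_nonpos) simp
    ultimately show ?thesis by simp
  qed
  have e4: "sum_list (map ?g (gen n n)) \<le> (\<Sum>\<mu>\<in>set (gen n n). ?g \<mu>)" by (rule sum_set_ge_list) simp
  show ?thesis using e1 e2 e3 e4 small_bound[OF n] by linarith
qed

lemma part_hd:
  assumes "2 \<le> x" "\<forall>y\<in>set r. y \<le> x" "sorted (rev r)" "\<forall>y\<in>set r. 0 < y" "x + sum_list r = n"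
  shows "x # r \<in> partitions n"
  using assms unfolding partitions_def is_partition_def by (auto simp: sorted_append)

lemma hd_neq: "hd xs \<noteq> hd ys \<Longrightarrow> xs \<noteq> ys" by auto

lemma sg_x_rep:
  assumes "x \<noteq> 1"
  shows "sg n (x # replicate m 1) = (-1) ^ (n + Suc m) * (int m - 1)"
  unfolding sg_def cnt1_filter using assms by (simp add: filter_replicate)

lemma sg_32_rep:
  shows "sg n (3 # 2 # replicate m 1) = (-1) ^ (n + Suc (Suc m)) * (int m - 1)"
  unfolding sg_def cnt1_filter by (simp add: filter_replicate)

lemma part2_pos:
  assumes n: "6 \<le> n"
  shows "\<exists>T. T \<subseteq> partitions n \<and> replicate n 1 \<in> T \<and> (\<Sum>\<mu>\<in>T. sg n \<mu>) < 0"
proof (cases "n = 6")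
  case True
  let ?T = "{replicate 6 1, [2, 1, 1, 1, 1], [4, 1, 1], [3, 3], [4, 2]} :: nat list set"
  have "?T \<subseteq> partitions 6" unfolding partitions_def is_partition_def by (auto simp: numeral_eq_Suc)
  moreover have "(\<Sum>\<mu>\<in>?T. sg 6 \<mu>) < 0" by (simp add: sg_def cnt1_filter numeral_eq_Suc)
  ultimately show ?thesis using True by blast
next
  case False
  then have n7: "7 \<le> n" using n by simp
  let ?r = "replicate n (1::nat)"
  let ?A = "2 # replicate (n - 2) (1::nat)"
  let ?B = "4 # replicate (n - 4) (1::nat)"
  let ?C = "3 # 2 # replicate (n - 5) (1::nat)"
  have hr: "hd ?r = 1" using n by (cases n) auto
  have dist: "?r \<notin> {?A, ?B, ?C}" "?A \<notin> {?B, ?C}" "?B \<notin> {?C}"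
    using hd_neq[of ?r ?A] hd_neq[of ?r ?B] hd_neq[of ?r ?C] hr by auto
  have pA: "?A \<in> partitions n" using hook2_part n by simp
  have pB: "?B \<in> partitions n" by (rule part_hd) (use n in \<open>auto simp: sum_list_replicate\<close>)
  have pC: "?C \<in> partitions n"
    by (rule part_hd) (use n in \<open>auto simp: sum_list_replicate sorted_append\<close>)
  let ?T = "{?r, ?A, ?B, ?C}"
  have sub: "?T \<subseteq> partitions n" using rep_part pA pB pC by auto
  obtain k where k: "n = k + 7" using n7 by (metis add.commute le_Suc_ex)
  have sA: "sg n ?A = - (int k + 4)"
    using sg_x_rep[of 2 n "n - 2"] unfolding k by (simp add: power_add)
  have sB: "sg n ?B = - (int k + 2)"
    using sg_x_rep[of 4 n "n - 4"] unfolding k by (simp add: power_add)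
  have sC: "sg n ?C = - (int k + 1)"
    using sg_32_rep[of n "n - 5"] unfolding k by (simp add: power_add)
  have sr: "sg n ?r = int k + 6" using sg_rep[of n] unfolding k by simp
  have "(\<Sum>\<mu>\<in>?T. sg n \<mu>) = sg n ?r + sg n ?A + sg n ?B + sg n ?C"
    using dist by (simp add: add.assoc)
  also have "\<dots> < 0" using sA sB sC sr by simp
  finally show ?thesis using sub by blast
qed

theorem part2:
  assumes n: "2 \<le> n"
  shows "(\<exists>T. T \<subseteq> partitions n \<and> replicate n 1 \<in> T \<and>
             schur_coeff n (psi n T) (2 # replicate (n - 2) 1) < 0) \<longleftrightarrow> 6 \<le> n"
proof
  assume "\<exists>T. T \<subseteq> partitions n \<and> replicate n 1 \<in> T \<and> schur_coeff n (psi n T) (2 # replicate (n - 2) 1) < 0"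
  then obtain T where T: "T \<subseteq> partitions n" "replicate n 1 \<in> T" "schur_coeff n (psi n T) (2 # replicate (n - 2) 1) < 0"
    by blast
  show "6 \<le> n"
  proof (rule ccontr)
    assume "\<not> 6 \<le> n"
    then have "0 \<le> (\<Sum>\<mu>\<in>T. sg n \<mu>)" using part2_neg[OF T(1,2) n] by simp
    then show False using T(3) coeff_bottom_psi[OF T(1) n] unfolding sg_def by simp
  qed
next
  assume "6 \<le> n"
  then obtain T where T: "T \<subseteq> partitions n" "replicate n 1 \<in> T" "(\<Sum>\<mu>\<in>T. sg n \<mu>) < 0"
    using part2_pos by blast
  then have "schur_coeff n (psi n T) (2 # replicate (n - 2) 1) < 0"
    using coeff_bottom_psi[OF T(1) n] unfolding sg_def by simp
  then show "\<exists>T. T \<subseteq> partitions n \<and> replicate n 1 \<in> T \<and> schur_coeff n (psi n T) (2 # replicate (n - 2) 1) < 0"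
    using T by blast
qed

theorem proposition4p2:
  fixes n :: nat
  assumes "2 \<le> n"
  shows "((\<exists>T. T \<subseteq> partitions n \<and> replicate n 1 \<in> T \<and>
             schur_coeff n (psi n T) [n - 1, 1] < 0) \<longleftrightarrow> 10 \<le> n) \<and>
         ((\<exists>T. T \<subseteq> partitions n \<and> replicate n 1 \<in> T \<and>
             schur_coeff n (psi n T) (2 # replicate (n - 2) 1) < 0) \<longleftrightarrow> 6 \<le> n)"
  using part1[OF assms] part2[OF assms] by blast


end
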